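(* Let $d\ge1$, $U=U(S_{\rm lazy},\mathcal{P}_{\rm lazy},G_{2d+1})$ and $\Pi_+$ the orthogonal projection onto its eigenspace for eigenvalue $1$. For $z=(z_1,\dots,z_d)\in T^d$ with all $z_j\neq-1$ put $$w_o(z)=\frac1{D(z)}\Big(\tfrac12\mathbf{e}_{d+1}+\sum_{j=1}^d\frac1{1+z_j}\big(z_j\mathbf{e}_j+\mathbf{e}_{d+1+j}\big)\Big),\qquad D(z)=\Big(\tfrac14+2\sum_{j=1}^d\frac1{|1+z_j|^2}\Big)^{1/2}.$$ Then for every $\phi\in\mathbb{C}^{2d+1}$ and $x\in\mathbb{Z}^d$, $$\Pi_+(\delta_0\otimes\phi)(x)=\int_{T^d}z^{-x}\langle\phi,w_o(z)\rangle_{\mathbb{C}^{2d+1}}\,w_o(z)\,d\nu(z).$$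
   Context: $T^d=\{z\in\mathbb{C}^d:|z_j|=1\}$ with normalized Haar (Lebesgue) measure $\nu$; $z^x=z_1^{x_1}\cdots z_d^{x_d}$. Inner products are linear in the first argument. $u_1,\dots,u_d$ standard basis of $\mathbb{Z}^d$, $\mathbf{e}_1,\dots,\mathbf{e}_{2d+1}$ standard basis of $\mathbb{C}^{2d+1}$, $P_j$ orthogonal projection onto $\mathbb{C}\mathbf{e}_j$. $S_{\rm lazy}=\{0,\pm u_1,\dots,\pm u_d\}$, $\mathcal{P}_{\rm lazy}$: $P_{u_j}=P_j$, $P_0=P_{d+1}$, $P_{-u_j}=P_{d+1+j}$. $(\tau^\alpha f)(x)=f(x-\alpha)$; $U(S_{\rm lazy},\mathcal{P}_{\rm lazy},C)=\big(\sum_{\alpha}\tau^\alpha P_\alpha\big)C$ with $C$ acting pointwise. $G_D=\frac2DJ-I$, $J$ the all-ones matrix. $\delta_0\otimes\phi$ equals $\phi$ at $0$ and $0$ elsewhere. *)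

theory Defs
  imports "HOL-Probability.Probability"
begin

definition Zd :: "nat \<Rightarrow> (nat \<Rightarrow> int) set" where
  "Zd d = {x. \<forall>j. j \<notin> {1..d} \<longrightarrow> x j = 0}"

definition unitv :: "nat \<Rightarrow> nat \<Rightarrow> int" where
  "unitv j = (\<lambda>i. if i = j then 1 else 0)"

definition shift_lazy :: "nat \<Rightarrow> nat \<Rightarrow> nat \<Rightarrow> int" where
  "shift_lazy d k =
     (if k \<in> {1..d} then unitv k
      else if k \<in> {d+2..2*d+1} then (\<lambda>i. - unitv (k - (d+1)) i)
      else (\<lambda>_. 0))"

definition grover :: "nat \<Rightarrow> (nat \<Rightarrow> complex) \<Rightarrow> nat \<Rightarrow> complex" where
  "grover D v k = (if k \<in> {1..D} then (2 / of_nat D) * (\<Sum>l=1..D. v l) - v k else 0)"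

text \<open>U = (sum_alpha tau^alpha P_alpha) C, with (tau^alpha f)(x) = f(x - alpha).\<close>
definition U_lazy :: "nat \<Rightarrow> ((nat \<Rightarrow> int) \<Rightarrow> nat \<Rightarrow> complex) \<Rightarrow> (nat \<Rightarrow> int) \<Rightarrow> nat \<Rightarrow> complex" where
  "U_lazy d \<psi> = (\<lambda>x k. grover (2*d+1) (\<psi> (\<lambda>i. x i - shift_lazy d k i)) k)"

definition l2space :: "nat \<Rightarrow> ((nat \<Rightarrow> int) \<Rightarrow> nat \<Rightarrow> complex) set" where
  "l2space d = {\<psi>. (\<forall>x. x \<notin> Zd d \<longrightarrow> \<psi> x = (\<lambda>_. 0))
                 \<and> (\<forall>x k. k \<notin> {1..2*d+1} \<longrightarrow> \<psi> x k = 0)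
                 \<and> (\<lambda>x. \<Sum>k=1..2*d+1. (cmod (\<psi> x k))^2) summable_on Zd d}"

definition l2inner :: "nat \<Rightarrow> ((nat \<Rightarrow> int) \<Rightarrow> nat \<Rightarrow> complex) \<Rightarrow> ((nat \<Rightarrow> int) \<Rightarrow> nat \<Rightarrow> complex) \<Rightarrow> complex" where
  "l2inner d \<psi> \<phi> = (\<Sum>\<^sub>\<infinity>x\<in>Zd d. \<Sum>k=1..2*d+1. \<psi> x k * cnj (\<phi> x k))"

definition eigenspace1 :: "nat \<Rightarrow> ((nat \<Rightarrow> int) \<Rightarrow> nat \<Rightarrow> complex) set" where
  "eigenspace1 d = {\<psi> \<in> l2space d. U_lazy d \<psi> = \<psi>}"

definition proj_plus :: "nat \<Rightarrow> ((nat \<Rightarrow> int) \<Rightarrow> nat \<Rightarrow> complex) \<Rightarrow> (nat \<Rightarrow> int) \<Rightarrow> nat \<Rightarrow> complex" where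
  "proj_plus d \<psi> = (THE p. p \<in> eigenspace1 d \<and>
      (\<forall>e\<in>eigenspace1 d. l2inner d (\<lambda>x k. \<psi> x k - p x k) e = 0))"

definition delta0 :: "(nat \<Rightarrow> complex) \<Rightarrow> (nat \<Rightarrow> int) \<Rightarrow> nat \<Rightarrow> complex" where
  "delta0 \<phi> = (\<lambda>x k. if x = (\<lambda>_. 0) then \<phi> k else 0)"

definition cinner_fin :: "nat \<Rightarrow> (nat \<Rightarrow> complex) \<Rightarrow> (nat \<Rightarrow> complex) \<Rightarrow> complex" where
  "cinner_fin D \<phi> w = (\<Sum>k=1..D. \<phi> k * cnj (w k))"

definition Dz :: "nat \<Rightarrow> (nat \<Rightarrow> complex) \<Rightarrow> real" where
  "Dz d z = sqrt (1/4 + 2 * (\<Sum>j=1..d. 1 / (cmod (1 + z j))^2))"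

text \<open>w_o(z), defined as 0 on the null set where some z_j = -1.\<close>
definition wo :: "nat \<Rightarrow> (nat \<Rightarrow> complex) \<Rightarrow> nat \<Rightarrow> complex" where
  "wo d z = (\<lambda>k. if (\<exists>j\<in>{1..d}. z j = -1) then 0 else
      (1 / complex_of_real (Dz d z)) *
      (if k = d+1 then 1/2
       else if k \<in> {1..d} then z k / (1 + z k)
       else if k \<in> {d+2..2*d+1} then 1 / (1 + z (k - (d+1)))
       else 0))"

definition haar :: "nat \<Rightarrow> (nat \<Rightarrow> complex) measure" where
  "haar d = distr (Pi\<^sub>M {1..d} (\<lambda>_. uniform_measure lborel {0..2*pi}))
                  (Pi\<^sub>M {1..d} (\<lambda>_. borel))
                  (\<lambda>\<theta>. restrict (\<lambda>j. cis (\<theta> j)) {1..d})"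

definition zpow :: "nat \<Rightarrow> (nat \<Rightarrow> complex) \<Rightarrow> (nat \<Rightarrow> int) \<Rightarrow> complex" where
  "zpow d z x = (\<Prod>j=1..d. z j powi (x j))"

end

theory Submission
  imports Defs
begin

definition UM :: "real measure" where "UM = uniform_measure lborel {0..2*pi}"

lemma prob_UM: "prob_space UM"
  unfolding UM_def by (rule prob_space_uniform_measure) auto

lemma UM_density: "UM = density lborel (\<lambda>t. ennreal (indicator {0..2*pi} t / (2*pi)))"
  unfolding UM_def uniform_measure_def
proof (rule density_cong)
  show "(\<lambda>x. indicator {0..2 * pi} x / emeasure lborel {0..2 * pi}) \<in> borel_measurable lborel" by simp
  show "(\<lambda>t. ennreal (indicator {0..2 * pi} t / (2 * pi))) \<in> borel_measurable lborel" by simp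
  show "AE x in lborel. indicator {0..2 * pi} x / emeasure lborel {0..2 * pi} =
          ennreal (indicator {0..2 * pi} x / (2 * pi))"
  proof (intro AE_I2)
    fix x :: real
    have "1 / ennreal (2*pi) = ennreal (1/(2*pi))"
      by (subst divide_ennreal[symmetric]) auto
    then show "indicator {0..2 * pi} x / emeasure lborel {0..2 * pi} =
          ennreal (indicator {0..2 * pi} x / (2 * pi))"
      by (simp add: indicator_def)
  qed
qed

lemma sets_UM[simp, measurable_cong]: "sets UM = sets borel"
  unfolding UM_def by simp

lemma cis_meas[measurable]: "cis \<in> borel_measurable borel"
  by (intro borel_measurable_continuous_onI continuous_intros)

lemma meas_UM: "f \<in> borel_measurable borel \<Longrightarrow> f \<in> borel_measurable UM"
  by (simp add: measurable_cong_sets[OF sets_UM refl])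

lemma integral_UM:
  fixes f :: "real \<Rightarrow> complex"
  assumes "f \<in> borel_measurable borel"
  shows "integral\<^sup>L UM f = (LBINT t=0..2*pi. f t) / (2*pi)"
proof -
  have "integral\<^sup>L UM f = LINT t|lborel. (indicator {0..2*pi} t / (2*pi)) *\<^sub>R f t"
    unfolding UM_density apply (rule integral_density) using assms by auto
  also have "\<dots> = (LINT t|lborel. indicator {0..2*pi} t *\<^sub>R f t) / (2*pi)"
  proof -
    have "(\<lambda>t. (indicator {0..2*pi} t / (2*pi)) *\<^sub>R f t) = (\<lambda>t. (1/(2*pi)) *\<^sub>R (indicator {0..2*pi} t *\<^sub>R f t))"
      by (auto simp: fun_eq_iff)
    then have "(LINT t|lborel. (indicator {0..2*pi} t / (2*pi)) *\<^sub>R f t) = (1/(2*pi)) *\<^sub>R (LINT t|lborel. indicator {0..2*pi} t *\<^sub>R f t)"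
      by (simp only: integral_scaleR_right)
    also have "\<dots> = (LINT t|lborel. indicator {0..2*pi} t *\<^sub>R f t) / (2*pi)"
      by (simp add: scaleR_conv_of_real field_simps)
    finally show ?thesis .
  qed
  also have "\<dots> = (LBINT t=0..2*pi. f t) / (2*pi)"
    using interval_integral_Icc[of 0 "2*pi" f] by (simp add: set_lebesgue_integral_def zero_ereal_def)
  finally show ?thesis .
qed

lemma cis_vderiv:
  fixes n :: real
  shows "((\<lambda>t. cis (n*t)) has_vector_derivative (\<i> * of_real n * cis (n*t))) (at t within S)"
proof -
  have "((\<lambda>t. n*t) has_derivative (\<lambda>h. n*h)) (at t within S)"
    by (auto intro!: derivative_eq_intros)
  from has_derivative_cis[OF this]
  show ?thesis unfolding has_vector_derivative_def
    by (simp add: scaleR_conv_of_real mult_ac)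
qed

lemma integral_UM_cis:
  fixes n :: int
  shows "integral\<^sup>L UM (\<lambda>t. cis (of_int n * t)) = (if n = 0 then 1 else 0)"
proof (cases "n = 0")
  case True
  interpret prob_space UM by (rule prob_UM)
  show ?thesis using True by (simp add: prob_space)
next
  case False
  have "(LBINT t=ereal 0..ereal (2*pi). cis (of_int n * t)) =
        (1/(\<i> * of_int n)) * cis (of_int n * (2*pi)) - (1/(\<i> * of_int n)) * cis (of_int n * 0)"
  proof (rule interval_integral_FTC_finite)
    show "continuous_on {min 0 (2 * pi)..max 0 (2 * pi)} (\<lambda>t. cis (real_of_int n * t))"
      by (intro continuous_intros)
    fix t :: real
    have "((\<lambda>t. (1/(\<i> * of_int n)) * cis (of_int n * t)) has_vector_derivative
            ((1/(\<i> * of_int n)) * (\<i> * of_real (of_int n) * cis (of_int n * t))))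
           (at t within {min 0 (2 * pi)..max 0 (2 * pi)})"
      by (intro has_vector_derivative_mult_right cis_vderiv)
    then show "((\<lambda>t. (1/(\<i> * of_int n)) * cis (of_int n * t)) has_vector_derivative
            cis (of_int n * t)) (at t within {min 0 (2 * pi)..max 0 (2 * pi)})"
      using False by simp
  qed
  also have "cis (of_int n * (2*pi)) = 1"
    by (metis cis_multiple_2pi mult.commute of_int_of_nat_eq Ints_of_int)
  finally have "(LBINT t=ereal 0..ereal (2*pi). cis (of_int n * t)) = 0" by simp
  then show ?thesis using False
    by (subst integral_UM) (auto simp: zero_ereal_def)
qed

definition Th :: "nat \<Rightarrow> (nat \<Rightarrow> real) measure" where "Th d = PiM {1..d} (\<lambda>_. UM)"
definition Zm :: "nat \<Rightarrow> (nat \<Rightarrow> real) \<Rightarrow> nat \<Rightarrow> complex" where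
  "Zm d \<theta> = (\<lambda>j\<in>{1..d}. cis (\<theta> j))"
definition E :: "nat \<Rightarrow> (nat \<Rightarrow> int) \<Rightarrow> (nat \<Rightarrow> real) \<Rightarrow> complex" where
  "E d x \<theta> = cis (\<Sum>j=1..d. of_int (x j) * \<theta> j)"

lemma prob_Th: "prob_space (Th d)"
  unfolding Th_def by (rule prob_space_PiM) (rule prob_UM)

lemma cis_sum: "cis (\<Sum>i\<in>A. f i) = (\<Prod>i\<in>A. cis (f i))"
  by (induction A rule: infinite_finite_induct) (auto simp: cis_mult[symmetric])


lemma space_Th: "space (Th d) = PiE {1..d} (\<lambda>_. UNIV)"
  unfolding Th_def by (simp add: space_PiM UM_def)

lemma comp_meas[measurable]: "(\<lambda>\<theta>. \<theta> j) \<in> borel_measurable (Th d)"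
proof (cases "j \<in> {1..d}")
  case True
  have "(\<lambda>\<theta>. \<theta> j) \<in> measurable (Th d) UM"
    unfolding Th_def by (rule measurable_component_singleton[OF True])
  then show ?thesis by (simp add: measurable_cong_sets[OF refl sets_UM])
next
  case False
  have "(\<lambda>\<theta>. \<theta> j) \<in> borel_measurable (Th d) \<longleftrightarrow> (\<lambda>\<theta>. undefined :: real) \<in> borel_measurable (Th d)"
    by (rule measurable_cong) (use False in \<open>auto simp: space_Th PiE_def extensional_def\<close>)
  then show ?thesis by simp
qed

lemma Zm_meas: "Zm d \<in> measurable (Th d) (PiM {1..d} (\<lambda>_. borel))"
  unfolding Zm_def by (rule measurable_restrict) measurable

lemma haar_Th: "haar d = distr (Th d) (PiM {1..d} (\<lambda>_. borel)) (Zm d)"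
  unfolding haar_def Th_def Zm_def UM_def restrict_def by simp

lemma int_haar:
  fixes f :: "(nat \<Rightarrow> complex) \<Rightarrow> complex"
  assumes "f \<in> borel_measurable (PiM {1..d} (\<lambda>_. borel))"
  shows "integral\<^sup>L (haar d) f = integral\<^sup>L (Th d) (\<lambda>\<theta>. f (Zm d \<theta>))"
  unfolding haar_Th by (rule integral_distr[OF Zm_meas assms])

lemma E_meas[measurable]: "E d x \<in> borel_measurable (Th d)"
  unfolding E_def by measurable

lemma zpow_Zm: "zpow d (Zm d \<theta>) x = E d x \<theta>"
  unfolding zpow_def Zm_def E_def cis_sum by (simp add: cis_power_int)

lemma int_E:
  assumes "x \<in> Zd d"
  shows "integral\<^sup>L (Th d) (E d x) = (if x = (\<lambda>_. 0) then 1 else 0)"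
proof -
  interpret product_sigma_finite "\<lambda>_::nat. UM"
    by (simp add: product_sigma_finite_def prob_space_imp_sigma_finite prob_UM)
  interpret UMp: prob_space UM by (rule prob_UM)
  have "integral\<^sup>L (Th d) (E d x) = integral\<^sup>L (Th d) (\<lambda>\<theta>. \<Prod>j\<in>{1..d}. cis (of_int (x j) * \<theta> j))"
    unfolding E_def by (simp add: cis_sum)
  also have "\<dots> = (\<Prod>j\<in>{1..d}. integral\<^sup>L UM (\<lambda>t. cis (of_int (x j) * t)))"
    unfolding Th_def
    by (rule product_integral_prod) (auto intro!: UMp.integrable_const_bound[where B=1] meas_UM)
  also have "\<dots> = (\<Prod>j\<in>{1..d}. if x j = 0 then 1 else 0)"
    by (simp add: integral_UM_cis)
  also have "\<dots> = (if x = (\<lambda>_. 0) then 1 else 0)"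
    using assms unfolding Zd_def by (auto simp: fun_eq_iff) (metis atLeastAtMost_iff One_nat_def)
  finally show ?thesis .
qed

lemma cnj_meas[measurable (raw)]:
  "f \<in> borel_measurable M \<Longrightarrow> (\<lambda>x. cnj (f x)) \<in> borel_measurable M"
proof -
  have "cnj \<in> borel_measurable borel"
    by (intro borel_measurable_continuous_onI continuous_intros)
  then show "f \<in> borel_measurable M \<Longrightarrow> (\<lambda>x. cnj (f x)) \<in> borel_measurable M"
    using measurable_compose by blast
qed

lemma bnd_int:
  fixes f :: "(nat \<Rightarrow> real) \<Rightarrow> 'b::{banach,second_countable_topology}"
  assumes "f \<in> borel_measurable (Th d)" "\<And>\<theta>. norm (f \<theta>) \<le> B"
  shows "integrable (Th d) f"
proof -
  interpret prob_space "Th d" by (rule prob_Th)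
  show ?thesis by (rule integrable_const_bound[where B=B]) (use assms in auto)
qed

lemma E_mult: "E d x \<theta> * E d y \<theta> = E d (\<lambda>j. x j + y j) \<theta>"
  unfolding E_def cis_mult by (simp add: sum.distrib[symmetric] algebra_simps)

lemma E_cnj: "cnj (E d x \<theta>) = E d (\<lambda>j. - x j) \<theta>"
  unfolding E_def by (simp add: sum_negf cis_cnj)

lemma E_norm[simp]: "cmod (E d x \<theta>) = 1"
  unfolding E_def by simp

lemma E_zero: "E d (\<lambda>_. 0) \<theta> = 1"
  unfolding E_def by simp

lemma Zd_diff: "x \<in> Zd d \<Longrightarrow> y \<in> Zd d \<Longrightarrow> (\<lambda>j. x j - y j) \<in> Zd d"
  unfolding Zd_def by auto
lemma Zd_add: "x \<in> Zd d \<Longrightarrow> y \<in> Zd d \<Longrightarrow> (\<lambda>j. x j + y j) \<in> Zd d"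
  unfolding Zd_def by auto
lemma Zd_neg: "x \<in> Zd d \<Longrightarrow> (\<lambda>j. - x j) \<in> Zd d"
  unfolding Zd_def by auto

lemma int_E2:
  assumes "x \<in> Zd d" "y \<in> Zd d"
  shows "integral\<^sup>L (Th d) (\<lambda>\<theta>. E d x \<theta> * cnj (E d y \<theta>)) = (if x = y then 1 else 0)"
proof -
  have "integral\<^sup>L (Th d) (\<lambda>\<theta>. E d x \<theta> * cnj (E d y \<theta>)) = integral\<^sup>L (Th d) (E d (\<lambda>j. x j - y j))"
    by (simp add: E_cnj E_mult)
  also have "\<dots> = (if (\<lambda>j. x j - y j) = (\<lambda>_. 0) then 1 else 0)"
    by (rule int_E[OF Zd_diff[OF assms]])
  also have "(\<lambda>j. x j - y j) = (\<lambda>_. 0) \<longleftrightarrow> x = y"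
    by (auto simp: fun_eq_iff)
  finally show ?thesis by simp
qed

lemma bessel_scalar:
  fixes g :: "(nat \<Rightarrow> real) \<Rightarrow> complex"
  assumes gm: "g \<in> borel_measurable (Th d)" and gb: "\<And>\<theta>. cmod (g \<theta>) \<le> B"
    and S: "finite S" "S \<subseteq> Zd d"
  shows "(\<Sum>x\<in>S. (cmod (integral\<^sup>L (Th d) (\<lambda>\<theta>. E d (\<lambda>j. - x j) \<theta> * g \<theta>)))^2)
         \<le> integral\<^sup>L (Th d) (\<lambda>\<theta>. (cmod (g \<theta>))^2)"
proof -
  define c where "c x = integral\<^sup>L (Th d) (\<lambda>\<theta>. E d (\<lambda>j. - x j) \<theta> * g \<theta>)" for x
  define s where "s \<theta> = (\<Sum>x\<in>S. c x * E d x \<theta>)" for \<theta>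
  have sm: "s \<in> borel_measurable (Th d)" unfolding s_def by measurable
  have Em: "\<And>x. E d x \<in> borel_measurable (Th d)" by measurable
  have B0: "0 \<le> B" using gb[of undefined] by (meson norm_ge_zero order_trans)
  have sb: "cmod (s \<theta>) \<le> (\<Sum>x\<in>S. cmod (c x))" for \<theta>
    unfolding s_def by (rule order_trans[OF norm_sum]) (simp add: norm_mult)
  have intg: "integrable (Th d) (\<lambda>\<theta>. a * E d x \<theta> * g \<theta>)" for a x
    by (rule bnd_int[where B="cmod a * B"]) (use gm gb in \<open>auto simp: norm_mult intro: mult_left_mono\<close>)
  have intE: "integrable (Th d) (\<lambda>\<theta>. a * E d x \<theta> * cnj (E d y \<theta>))" for a x y
    by (rule bnd_int[where B="cmod a"]) (auto simp: norm_mult)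
  have I1: "integral\<^sup>L (Th d) (\<lambda>\<theta>. g \<theta> * cnj (s \<theta>)) = (\<Sum>x\<in>S. cnj (c x) * c x)"
  proof -
    have "(\<lambda>\<theta>. g \<theta> * cnj (s \<theta>)) = (\<lambda>\<theta>. \<Sum>x\<in>S. cnj (c x) * E d (\<lambda>j. - x j) \<theta> * g \<theta>)"
      by (auto simp: s_def sum_distrib_left E_cnj mult_ac)
    then have "integral\<^sup>L (Th d) (\<lambda>\<theta>. g \<theta> * cnj (s \<theta>)) =
       (\<Sum>x\<in>S. integral\<^sup>L (Th d) (\<lambda>\<theta>. cnj (c x) * E d (\<lambda>j. - x j) \<theta> * g \<theta>))"
      by (simp add: Bochner_Integration.integral_sum[OF intg])
    also have "\<dots> = (\<Sum>x\<in>S. cnj (c x) * c x)"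
      unfolding c_def by (simp add: mult.assoc)
    finally show ?thesis .
  qed
  have I3: "integral\<^sup>L (Th d) (\<lambda>\<theta>. s \<theta> * cnj (g \<theta>)) = (\<Sum>x\<in>S. cnj (c x) * c x)"
  proof -
    have "integral\<^sup>L (Th d) (\<lambda>\<theta>. s \<theta> * cnj (g \<theta>)) = cnj (integral\<^sup>L (Th d) (\<lambda>\<theta>. g \<theta> * cnj (s \<theta>)))"
      by (simp add: Bochner_Integration.integral_cnj[symmetric] mult.commute)
    also have "\<dots> = (\<Sum>x\<in>S. cnj (c x) * c x)" unfolding I1 by (simp add: mult.commute)
    finally show ?thesis .
  qed
  have I2: "integral\<^sup>L (Th d) (\<lambda>\<theta>. s \<theta> * cnj (s \<theta>)) = (\<Sum>x\<in>S. cnj (c x) * c x)"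
  proof -
    have "(\<lambda>\<theta>. s \<theta> * cnj (s \<theta>)) = (\<lambda>\<theta>. \<Sum>y\<in>S. \<Sum>x\<in>S. (c x * cnj (c y)) * E d x \<theta> * cnj (E d y \<theta>))"
      by (auto simp: s_def sum_distrib_left sum_distrib_right mult_ac)
    then have "integral\<^sup>L (Th d) (\<lambda>\<theta>. s \<theta> * cnj (s \<theta>)) =
       (\<Sum>y\<in>S. \<Sum>x\<in>S. integral\<^sup>L (Th d) (\<lambda>\<theta>. (c x * cnj (c y)) * E d x \<theta> * cnj (E d y \<theta>)))"
      by (simp add: Bochner_Integration.integral_sum intE Bochner_Integration.integrable_sum)
    also have "\<dots> = (\<Sum>y\<in>S. \<Sum>x\<in>S. (c x * cnj (c y)) * (if x = y then 1 else 0))"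
      using S by (intro sum.cong refl) (simp add: mult.assoc int_E2 subsetD)
    also have "\<dots> = (\<Sum>x\<in>S. cnj (c x) * c x)"
      using S by (simp add: if_distrib cong: if_cong) (simp add: mult.commute)
    finally show ?thesis .
  qed
  have gint: "integrable (Th d) (\<lambda>\<theta>. g \<theta> * cnj (g \<theta>))"
    by (rule bnd_int[where B="B*B"]) (use gm gb B0 in \<open>auto simp: norm_mult intro!: mult_mono\<close>)
  have X: "integrable (Th d) (\<lambda>\<theta>. g \<theta> * cnj (s \<theta>))" "integrable (Th d) (\<lambda>\<theta>. s \<theta> * cnj (g \<theta>))"
     "integrable (Th d) (\<lambda>\<theta>. s \<theta> * cnj (s \<theta>))"
  proof -
    let ?C = "\<Sum>x\<in>S. cmod (c x)"
    have C0: "0 \<le> ?C" by (simp add: sum_nonneg)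
    show "integrable (Th d) (\<lambda>\<theta>. g \<theta> * cnj (s \<theta>))"
      by (rule bnd_int[where B="B * ?C"]) (use gm sm sb gb C0 B0 in \<open>auto simp: norm_mult intro!: mult_mono\<close>)
    show "integrable (Th d) (\<lambda>\<theta>. s \<theta> * cnj (g \<theta>))"
      by (rule bnd_int[where B="?C * B"]) (use gm sm sb gb C0 B0 in \<open>auto simp: norm_mult intro!: mult_mono\<close>)
    show "integrable (Th d) (\<lambda>\<theta>. s \<theta> * cnj (s \<theta>))"
      by (rule bnd_int[where B="?C * ?C"]) (use gm sm sb gb C0 B0 in \<open>auto simp: norm_mult intro!: mult_mono\<close>)
  qed
  have "(\<lambda>\<theta>. (g \<theta> - s \<theta>) * cnj (g \<theta> - s \<theta>)) =
        (\<lambda>\<theta>. g \<theta> * cnj (g \<theta>) - g \<theta> * cnj (s \<theta>) - s \<theta> * cnj (g \<theta>) + s \<theta> * cnj (s \<theta>))"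
    by (auto simp: algebra_simps)
  then have e0: "integral\<^sup>L (Th d) (\<lambda>\<theta>. (g \<theta> - s \<theta>) * cnj (g \<theta> - s \<theta>)) =
     integral\<^sup>L (Th d) (\<lambda>\<theta>. g \<theta> * cnj (g \<theta>)) - (\<Sum>x\<in>S. cnj (c x) * c x)"
    using gint X by (simp add: I1 I2 I3)
  have e1: "integral\<^sup>L (Th d) (\<lambda>\<theta>. (g \<theta> - s \<theta>) * cnj (g \<theta> - s \<theta>)) =
      of_real (integral\<^sup>L (Th d) (\<lambda>\<theta>. (cmod (g \<theta> - s \<theta>))^2))"
    by (simp only: integral_complex_of_real[symmetric] complex_norm_square)
  have e2: "integral\<^sup>L (Th d) (\<lambda>\<theta>. g \<theta> * cnj (g \<theta>)) =
      of_real (integral\<^sup>L (Th d) (\<lambda>\<theta>. (cmod (g \<theta>))^2))"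
    by (simp only: integral_complex_of_real[symmetric] complex_norm_square)
  have e3: "(\<Sum>x\<in>S. cnj (c x) * c x) = of_real (\<Sum>x\<in>S. (cmod (c x))^2)"
    by (simp only: of_real_sum complex_norm_square) (simp add: mult.commute)
  have "complex_of_real (integral\<^sup>L (Th d) (\<lambda>\<theta>. (cmod (g \<theta> - s \<theta>))^2)) =
      complex_of_real (integral\<^sup>L (Th d) (\<lambda>\<theta>. (cmod (g \<theta>))^2) - (\<Sum>x\<in>S. (cmod (c x))^2))"
    unfolding of_real_diff e1[symmetric] e2[symmetric] e3[symmetric] by (rule e0)
  then have "integral\<^sup>L (Th d) (\<lambda>\<theta>. (cmod (g \<theta> - s \<theta>))^2) =
      integral\<^sup>L (Th d) (\<lambda>\<theta>. (cmod (g \<theta>))^2) - (\<Sum>x\<in>S. (cmod (c x))^2)"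
    by (simp only: of_real_eq_iff)
  moreover have "0 \<le> integral\<^sup>L (Th d) (\<lambda>\<theta>. (cmod (g \<theta> - s \<theta>))^2)"
    by simp
  ultimately show ?thesis unfolding c_def by linarith
qed

lemma summable_on_sum_fin:
  fixes f :: "'i \<Rightarrow> 'a \<Rightarrow> 'b::{topological_comm_monoid_add,t2_space}"
  assumes "finite I" "\<And>i. i \<in> I \<Longrightarrow> f i summable_on A"
  shows "(\<lambda>x. \<Sum>i\<in>I. f i x) summable_on A"
  using assms by (induction I rule: finite_induct) (auto intro!: summable_on_add)

lemma infsum_sum_fin:
  fixes f :: "'i \<Rightarrow> 'a \<Rightarrow> 'b::{topological_comm_monoid_add,t2_space}"
  assumes "finite I" "\<And>i. i \<in> I \<Longrightarrow> f i summable_on A"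
  shows "infsum (\<lambda>x. \<Sum>i\<in>I. f i x) A = (\<Sum>i\<in>I. infsum (f i) A)"
  using assms
proof (induction I rule: finite_induct)
  case (insert i I)
  have "infsum (\<lambda>x. \<Sum>i\<in>insert i I. f i x) A = infsum (\<lambda>x. f i x + (\<Sum>i\<in>I. f i x)) A"
    using insert by simp
  also have "\<dots> = infsum (f i) A + infsum (\<lambda>x. \<Sum>i\<in>I. f i x) A"
    using insert by (intro infsum_add summable_on_sum_fin) auto
  finally show ?case using insert by simp
qed simp

lemma summable_on_diff':
  fixes f g :: "'a \<Rightarrow> 'b::{topological_ab_group_add,t2_space}"
  assumes "f summable_on A" "g summable_on A"
  shows "(\<lambda>x. f x - g x) summable_on A"
  using summable_on_add[OF assms(1) summable_on_uminus[THEN iffD2, OF assms(2)]] by simp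

lemma infsum_diff':
  fixes f g :: "'a \<Rightarrow> 'b::{topological_ab_group_add,t2_space}"
  assumes "f summable_on A" "g summable_on A"
  shows "infsum (\<lambda>x. f x - g x) A = infsum f A - infsum g A"
  using infsum_add[OF assms(1) summable_on_uminus[THEN iffD2, OF assms(2)]] by (simp add: infsum_uminus)

lemma summable_lc:
  fixes f g :: "'a \<Rightarrow> real"
  assumes "f summable_on A" "g summable_on A"
  shows "(\<lambda>x. (t * f x + g x / t) / 2) summable_on A"
proof -
  have "(\<lambda>x. t * f x) summable_on A" by (rule summable_on_cmult_right[OF assms(1)])
  moreover have "(\<lambda>x. g x * inverse t) summable_on A" by (rule summable_on_cmult_left[OF assms(2)])
  ultimately have "(\<lambda>x. t * f x + g x * inverse t) summable_on A" by (rule summable_on_add)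
  then have "(\<lambda>x. (t * f x + g x * inverse t) * inverse 2) summable_on A" by (rule summable_on_cmult_left)
  then show ?thesis by (simp only: divide_inverse)
qed

lemma infsum_lc:
  fixes f g :: "'a \<Rightarrow> real"
  assumes "f summable_on A" "g summable_on A"
  shows "infsum (\<lambda>x. (t * f x + g x / t) / 2) A = (t * infsum f A + infsum g A / t) / 2"
proof -
  have a: "(\<lambda>x. t * f x) summable_on A" by (rule summable_on_cmult_right[OF assms(1)])
  have b: "(\<lambda>x. g x * inverse t) summable_on A" by (rule summable_on_cmult_left[OF assms(2)])
  have c: "(\<lambda>x. (t * f x + g x * inverse t)) summable_on A" by (rule summable_on_add[OF a b])
  have "infsum (\<lambda>x. (t * f x + g x * inverse t) * inverse 2) A = infsum (\<lambda>x. (t * f x + g x * inverse t)) A * inverse 2"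
    by (rule infsum_cmult_left) (rule c)
  also have "infsum (\<lambda>x. (t * f x + g x * inverse t)) A = infsum (\<lambda>x. t * f x) A + infsum (\<lambda>x. g x * inverse t) A"
    by (rule infsum_add[OF a b])
  also have "infsum (\<lambda>x. t * f x) A = t * infsum f A"
    by (rule infsum_cmult_right) (rule assms(1))
  also have "infsum (\<lambda>x. g x * inverse t) A = infsum g A * inverse t"
    by (rule infsum_cmult_left) (rule assms(2))
  finally show ?thesis by (simp only: divide_inverse)
qed

definition K :: "nat \<Rightarrow> nat set" where "K d = {1..2*d+1}"

definition nrm :: "nat \<Rightarrow> ((nat \<Rightarrow> int) \<Rightarrow> nat \<Rightarrow> complex) \<Rightarrow> real" where
  "nrm d \<psi> = infsum (\<lambda>x. \<Sum>k\<in>K d. (cmod (\<psi> x k))^2) (Zd d)"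

lemma l2D:
  assumes "\<psi> \<in> l2space d"
  shows "\<And>x. x \<notin> Zd d \<Longrightarrow> \<psi> x = (\<lambda>_. 0)" "\<And>x k. k \<notin> K d \<Longrightarrow> \<psi> x k = 0"
    "(\<lambda>x. \<Sum>k\<in>K d. (cmod (\<psi> x k))^2) summable_on Zd d"
proof -
  have h: "(\<forall>x. x \<notin> Zd d \<longrightarrow> \<psi> x = (\<lambda>_. 0))
                 \<and> (\<forall>x k. k \<notin> {1..2*d+1} \<longrightarrow> \<psi> x k = 0)
                 \<and> (\<lambda>x. \<Sum>k=1..2*d+1. (cmod (\<psi> x k))^2) summable_on Zd d"
    using assms unfolding l2space_def mem_Collect_eq .
  show "\<And>x. x \<notin> Zd d \<Longrightarrow> \<psi> x = (\<lambda>_. 0)" using h[THEN conjunct1] by blast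
  show "\<And>x k. k \<notin> K d \<Longrightarrow> \<psi> x k = 0" using h[THEN conjunct2, THEN conjunct1] unfolding K_def by blast
  show "(\<lambda>x. \<Sum>k\<in>K d. (cmod (\<psi> x k))^2) summable_on Zd d" using h[THEN conjunct2, THEN conjunct2] unfolding K_def .
qed

lemma l2I:
  assumes "\<And>x. x \<notin> Zd d \<Longrightarrow> \<psi> x = (\<lambda>_. 0)" "\<And>x k. k \<notin> K d \<Longrightarrow> \<psi> x k = 0"
    "(\<lambda>x. \<Sum>k\<in>K d. (cmod (\<psi> x k))^2) summable_on Zd d"
  shows "\<psi> \<in> l2space d"
  unfolding l2space_def mem_Collect_eq
proof (intro conjI allI impI)
  show "\<And>x. x \<notin> Zd d \<Longrightarrow> \<psi> x = (\<lambda>_. 0)" by (rule assms(1))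
  show "\<And>x k. k \<notin> {1..2*d+1} \<Longrightarrow> \<psi> x k = 0" using assms(2) unfolding K_def .
  show "(\<lambda>x. \<Sum>k=1..2*d+1. (cmod (\<psi> x k))^2) summable_on Zd d" using assms(3) unfolding K_def .
qed

lemma l2inner_K: "l2inner d a b = infsum (\<lambda>x. \<Sum>k\<in>K d. a x k * cnj (b x k)) (Zd d)"
  unfolding l2inner_def K_def by simp

lemma nrm_nonneg: "0 \<le> nrm d a"
  unfolding nrm_def by (rule infsum_nonneg) (simp add: sum_nonneg)

lemma prod_le_sq: "cmod u * cmod v \<le> (t * (cmod u)^2 + (cmod v)^2 / t) / 2" if "t > 0" for u v :: complex and t :: real
proof -
  have "0 \<le> (t * cmod u - cmod v)^2" by simp
  also have "\<dots> = t * (t * (cmod u)^2) + (cmod v)^2 - 2 * t * (cmod u * cmod v)"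
    by (simp add: power2_diff power_mult_distrib algebra_simps power2_eq_square)
  finally have "2 * t * (cmod u * cmod v) \<le> t * (t * (cmod u)^2 + (cmod v)^2 / t)"
    using that by (simp add: algebra_simps)
  then have "t * (2 * (cmod u * cmod v)) \<le> t * (t * (cmod u)^2 + (cmod v)^2 / t)"
    by (simp add: algebra_simps)
  then have "2 * (cmod u * cmod v) \<le> t * (cmod u)^2 + (cmod v)^2 / t"
    using that by (simp add: mult_le_cancel_left_pos)
  then show ?thesis by simp
qed

lemma ip_abs_summable:
  assumes a: "a \<in> l2space d" and b: "b \<in> l2space d" and t: "t > 0"
  shows "(\<lambda>x. \<Sum>k\<in>K d. cmod (a x k) * cmod (b x k)) summable_on Zd d"
    and "(\<lambda>x. \<Sum>k\<in>K d. cmod (a x k) * cmod (b x k)) \<le> (\<lambda>x. (t * (\<Sum>k\<in>K d. (cmod (a x k))^2) + (\<Sum>k\<in>K d. (cmod (b x k))^2) / t) / 2)"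
proof -
  show le: "(\<lambda>x. \<Sum>k\<in>K d. cmod (a x k) * cmod (b x k)) \<le> (\<lambda>x. (t * (\<Sum>k\<in>K d. (cmod (a x k))^2) + (\<Sum>k\<in>K d. (cmod (b x k))^2) / t) / 2)"
  proof (rule le_funI)
    fix x
    have "(\<Sum>k\<in>K d. cmod (a x k) * cmod (b x k)) \<le> (\<Sum>k\<in>K d. (t * (cmod (a x k))^2 + (cmod (b x k))^2 / t) / 2)"
      by (rule sum_mono) (rule prod_le_sq[OF t])
    also have "\<dots> = (t * (\<Sum>k\<in>K d. (cmod (a x k))^2) + (\<Sum>k\<in>K d. (cmod (b x k))^2) / t) / 2"
      by (simp add: sum_divide_distrib[symmetric] sum_distrib_left sum.distrib)
    finally show "(\<Sum>k\<in>K d. cmod (a x k) * cmod (b x k)) \<le> (t * (\<Sum>k\<in>K d. (cmod (a x k))^2) + (\<Sum>k\<in>K d. (cmod (b x k))^2) / t) / 2" .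
  qed
  have s: "(\<lambda>x. (t * (\<Sum>k\<in>K d. (cmod (a x k))^2) + (\<Sum>k\<in>K d. (cmod (b x k))^2) / t) / 2) summable_on Zd d"
    using l2D(3)[OF a] l2D(3)[OF b] by (rule summable_lc)
  show "(\<lambda>x. \<Sum>k\<in>K d. cmod (a x k) * cmod (b x k)) summable_on Zd d"
    by (rule summable_on_comparison_test[OF s]) (use le in \<open>auto simp: le_fun_def intro: sum_nonneg\<close>)
qed

lemma ip_summable:
  assumes a: "a \<in> l2space d" and b: "b \<in> l2space d"
  shows "(\<lambda>x. \<Sum>k\<in>K d. a x k * cnj (b x k)) summable_on Zd d"
proof -
  have "(\<lambda>x. norm (\<Sum>k\<in>K d. a x k * cnj (b x k))) summable_on Zd d"
  proof (rule summable_on_comparison_test[OF ip_abs_summable(1)[OF a b, of 1]])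
    fix x show "norm (\<Sum>k\<in>K d. a x k * cnj (b x k)) \<le> (\<Sum>k\<in>K d. cmod (a x k) * cmod (b x k))"
      by (rule order_trans[OF norm_sum]) (simp add: norm_mult)
  qed auto
  then show ?thesis by (simp add: summable_on_iff_abs_summable_on_complex)
qed

lemma ip_bound:
  assumes a: "a \<in> l2space d" and b: "b \<in> l2space d" and t: "t > 0"
  shows "cmod (l2inner d a b) \<le> (t * nrm d a + nrm d b / t) / 2"
proof -
  have ab: "Infinite_Sum.abs_summable_on (\<lambda>x. \<Sum>k\<in>K d. a x k * cnj (b x k)) (Zd d)"
    using ip_summable[OF a b] by (simp add: summable_on_iff_abs_summable_on_complex)
  have "cmod (l2inner d a b) \<le> infsum (\<lambda>x. norm (\<Sum>k\<in>K d. a x k * cnj (b x k))) (Zd d)"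
    unfolding l2inner_K by (rule norm_infsum_bound[OF ab])
  also have "\<dots> \<le> infsum (\<lambda>x. (t * (\<Sum>k\<in>K d. (cmod (a x k))^2) + (\<Sum>k\<in>K d. (cmod (b x k))^2) / t) / 2) (Zd d)"
  proof (rule infsum_mono[OF ab])
    show "(\<lambda>x. (t * (\<Sum>k\<in>K d. (cmod (a x k))^2) + (\<Sum>k\<in>K d. (cmod (b x k))^2) / t) / 2) summable_on Zd d"
      using l2D(3)[OF a] l2D(3)[OF b] by (rule summable_lc)
    fix x
    have "norm (\<Sum>k\<in>K d. a x k * cnj (b x k)) \<le> (\<Sum>k\<in>K d. cmod (a x k) * cmod (b x k))"
      by (rule order_trans[OF norm_sum]) (simp add: norm_mult)
    also have "\<dots> \<le> (t * (\<Sum>k\<in>K d. (cmod (a x k))^2) + (\<Sum>k\<in>K d. (cmod (b x k))^2) / t) / 2"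
      using ip_abs_summable(2)[OF a b t] by (auto simp: le_fun_def)
    finally show "norm (\<Sum>k\<in>K d. a x k * cnj (b x k)) \<le> (t * (\<Sum>k\<in>K d. (cmod (a x k))^2) + (\<Sum>k\<in>K d. (cmod (b x k))^2) / t) / 2" .
  qed
  also have "\<dots> = (t * nrm d a + nrm d b / t) / 2"
    unfolding nrm_def using l2D(3)[OF a] l2D(3)[OF b] by (rule infsum_lc)
  finally show ?thesis .
qed

lemma ip_diff_left:
  assumes a: "a \<in> l2space d" and b: "b \<in> l2space d" and c: "c \<in> l2space d"
  shows "l2inner d (\<lambda>x k. a x k - b x k) c = l2inner d a c - l2inner d b c"
proof -
  have "l2inner d (\<lambda>x k. a x k - b x k) c =
        infsum (\<lambda>x. (\<Sum>k\<in>K d. a x k * cnj (c x k)) - (\<Sum>k\<in>K d. b x k * cnj (c x k))) (Zd d)"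
    unfolding l2inner_K by (simp add: algebra_simps sum_subtractf)
  also have "\<dots> = l2inner d a c - l2inner d b c"
    unfolding l2inner_K by (rule infsum_diff'[OF ip_summable[OF a c] ip_summable[OF b c]])
  finally show ?thesis .
qed

lemma infsum_of_real':
  fixes f :: "'a \<Rightarrow> real"
  shows "infsum (\<lambda>x. complex_of_real (f x)) A = of_real (infsum f A)"
proof (cases "f summable_on A")
  case True
  show ?thesis by (rule infsumI[OF has_sum_of_real[OF has_sum_infsum[OF True]]])
next
  case False
  have "\<not> (\<lambda>x. complex_of_real (f x)) summable_on A"
  proof
    assume "(\<lambda>x. complex_of_real (f x)) summable_on A"
    from summable_on_Re[OF this] have "f summable_on A" by simp
    with False show False by simp
  qed
  then show ?thesis using False by (simp add: infsum_not_exists)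
qed

lemma ip_self: "l2inner d a a = of_real (nrm d a)"
proof -
  have "l2inner d a a = infsum (\<lambda>x. of_real (\<Sum>k\<in>K d. (cmod (a x k))^2)) (Zd d)"
    unfolding l2inner_K by (simp only: of_real_sum complex_norm_square)
  also have "\<dots> = of_real (nrm d a)"
    unfolding nrm_def by (rule infsum_of_real')
  finally show ?thesis .
qed

lemma l2_zero:
  assumes a: "a \<in> l2space d" and n: "nrm d a = 0"
  shows "a = (\<lambda>x k. 0)"
proof (intro ext)
  fix x k
  show "a x k = 0"
  proof (cases "x \<in> Zd d \<and> k \<in> K d")
    case True
    have "(\<Sum>k\<in>K d. (cmod (a x k))^2) = 0"
      by (rule nonneg_infsum_le_0D[where A="Zd d"]) (use n l2D(3)[OF a] True in \<open>auto simp: nrm_def intro: sum_nonneg\<close>)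
    then have "(cmod (a x k))^2 = 0"
      using True by (subst (asm) sum_nonneg_eq_0_iff) (auto simp: K_def)
    then show ?thesis by simp
  next
    case False
    then show ?thesis using l2D(1)[OF a, of x] l2D(2)[OF a, of k x] by (auto simp: fun_eq_iff)
  qed
qed

lemma l2_diff:
  assumes a: "a \<in> l2space d" and b: "b \<in> l2space d"
  shows "(\<lambda>x k. a x k - b x k) \<in> l2space d"
proof (rule l2I)
  show "\<And>x. x \<notin> Zd d \<Longrightarrow> (\<lambda>k. a x k - b x k) = (\<lambda>_. 0)"
    using l2D(1)[OF a] l2D(1)[OF b] by (auto simp: fun_eq_iff)
  show "\<And>x k. k \<notin> K d \<Longrightarrow> a x k - b x k = 0"
    using l2D(2)[OF a] l2D(2)[OF b] by auto
  have s: "(\<lambda>x. 2 * (\<Sum>k\<in>K d. (cmod (a x k))^2) + 2 * (\<Sum>k\<in>K d. (cmod (b x k))^2)) summable_on Zd d"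
    by (intro summable_on_add summable_on_cmult_right l2D(3) a b)
  show "(\<lambda>x. \<Sum>k\<in>K d. (cmod (a x k - b x k))^2) summable_on Zd d"
  proof (rule summable_on_comparison_test[OF s])
    fix x
    have "(\<Sum>k\<in>K d. (cmod (a x k - b x k))^2) \<le> (\<Sum>k\<in>K d. 2 * (cmod (a x k))^2 + 2 * (cmod (b x k))^2)"
    proof (rule sum_mono)
      fix k
      have "cmod (a x k - b x k) \<le> cmod (a x k) + cmod (b x k)" by (rule norm_triangle_ineq4)
      then have "(cmod (a x k - b x k))^2 \<le> (cmod (a x k) + cmod (b x k))^2"
        by (rule power_mono) simp
      also have "\<dots> \<le> 2 * (cmod (a x k))^2 + 2 * (cmod (b x k))^2"
        using sum_squares_bound[of "cmod (a x k)" "cmod (b x k)"]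
        by (simp add: power2_eq_square algebra_simps)
      finally show "(cmod (a x k - b x k))^2 \<le> 2 * (cmod (a x k))^2 + 2 * (cmod (b x k))^2" .
    qed
    then show "(\<Sum>k\<in>K d. (cmod (a x k - b x k))^2) \<le> 2 * (\<Sum>k\<in>K d. (cmod (a x k))^2) + 2 * (\<Sum>k\<in>K d. (cmod (b x k))^2)"
      by (simp add: sum.distrib sum_distrib_left)
  qed (auto intro: sum_nonneg)
qed

lemma grover_diff: "grover D (\<lambda>k. u k - v k) k = grover D u k - grover D v k"
  unfolding grover_def by (simp add: sum_subtractf algebra_simps)

lemma grover_cmult: "grover D (\<lambda>k. c * u k) k = c * grover D u k"
  unfolding grover_def by (simp add: sum_distrib_left[symmetric] algebra_simps)

lemma U_diff: "U_lazy d (\<lambda>x k. a x k - b x k) = (\<lambda>x k. U_lazy d a x k - U_lazy d b x k)"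
  unfolding U_lazy_def by (simp add: grover_diff)

lemma eig_diff:
  assumes "a \<in> eigenspace1 d" "b \<in> eigenspace1 d"
  shows "(\<lambda>x k. a x k - b x k) \<in> eigenspace1 d"
  using assms unfolding eigenspace1_def by (auto simp: l2_diff U_diff)

lemma proj_eq:
  assumes psi: "\<psi> \<in> l2space d" and p: "p \<in> eigenspace1 d"
    and orth: "\<And>e. e \<in> eigenspace1 d \<Longrightarrow> l2inner d (\<lambda>x k. \<psi> x k - p x k) e = 0"
  shows "proj_plus d \<psi> = p"
  unfolding proj_plus_def
proof (rule the_equality)
  show "p \<in> eigenspace1 d \<and> (\<forall>e\<in>eigenspace1 d. l2inner d (\<lambda>x k. \<psi> x k - p x k) e = 0)"
    using p orth by auto
  fix p' assume h: "p' \<in> eigenspace1 d \<and> (\<forall>e\<in>eigenspace1 d. l2inner d (\<lambda>x k. \<psi> x k - p' x k) e = 0)"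
  have pl: "p \<in> l2space d" "p' \<in> l2space d" using p h unfolding eigenspace1_def by auto
  define q where "q = (\<lambda>x k. p x k - p' x k)"
  have qe: "q \<in> eigenspace1 d" unfolding q_def using p h by (intro eig_diff) auto
  have ql: "q \<in> l2space d" using qe unfolding eigenspace1_def by auto
  have "q = (\<lambda>x k. (\<psi> x k - p' x k) - (\<psi> x k - p x k))" unfolding q_def by auto
  then have "l2inner d q q = l2inner d (\<lambda>x k. \<psi> x k - p' x k) q - l2inner d (\<lambda>x k. \<psi> x k - p x k) q"
    using ip_diff_left[OF l2_diff[OF psi pl(2)] l2_diff[OF psi pl(1)] ql] by simp
  also have "\<dots> = 0" using h orth qe by simp
  finally have "nrm d q = 0" by (simp add: ip_self)
  then have "q = (\<lambda>x k. 0)" by (rule l2_zero[OF ql])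
  then show "p' = p" unfolding q_def by (auto simp: fun_eq_iff)
qed

definition good :: "nat \<Rightarrow> ((nat \<Rightarrow> real) \<Rightarrow> nat \<Rightarrow> complex) \<Rightarrow> bool" where
  "good d f \<longleftrightarrow> (\<forall>k. (\<lambda>\<theta>. f \<theta> k) \<in> borel_measurable (Th d)) \<and> (\<exists>B. \<forall>\<theta> k. cmod (f \<theta> k) \<le> B)
      \<and> (\<forall>\<theta> k. k \<notin> K d \<longrightarrow> f \<theta> k = 0)"

definition FT :: "nat \<Rightarrow> ((nat \<Rightarrow> real) \<Rightarrow> nat \<Rightarrow> complex) \<Rightarrow> (nat \<Rightarrow> int) \<Rightarrow> nat \<Rightarrow> complex" where
  "FT d f = (\<lambda>x k. if x \<in> Zd d then integral\<^sup>L (Th d) (\<lambda>\<theta>. E d (\<lambda>j. - x j) \<theta> * f \<theta> k) else 0)"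

lemma goodD:
  assumes "good d f"
  shows "\<And>k. (\<lambda>\<theta>. f \<theta> k) \<in> borel_measurable (Th d)" "\<exists>B. \<forall>\<theta> k. cmod (f \<theta> k) \<le> B"
    "\<And>\<theta> k. k \<notin> K d \<Longrightarrow> f \<theta> k = 0"
  using assms unfolding good_def by blast+

lemma good_int:
  assumes f: "good d f" and c: "c \<in> borel_measurable (Th d)" "\<And>\<theta>. cmod (c \<theta>) \<le> C"
  shows "integrable (Th d) (\<lambda>\<theta>. c \<theta> * f \<theta> k)"
proof -
  obtain B where B: "\<And>\<theta> k. cmod (f \<theta> k) \<le> B" using goodD(2)[OF f] by blast
  have C0: "0 \<le> C" using c(2)[of undefined] by (meson norm_ge_zero order_trans)
  show ?thesis
    by (rule bnd_int[where B="C * B"])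
      (use goodD(1)[OF f] c B C0 in \<open>auto simp: norm_mult intro!: mult_mono\<close>)
qed

lemma good_intE: "good d f \<Longrightarrow> integrable (Th d) (\<lambda>\<theta>. E d x \<theta> * f \<theta> k)"
  by (rule good_int[where C=1]) auto

lemma good_sq_int:
  assumes f: "good d f"
  shows "integrable (Th d) (\<lambda>\<theta>. (cmod (f \<theta> k))^2)"
proof -
  obtain B where B: "\<And>\<theta> k. cmod (f \<theta> k) \<le> B" using goodD(2)[OF f] by blast
  show ?thesis
    by (rule bnd_int[where B="B^2"]) (use goodD(1)[OF f] B in \<open>auto intro!: power_mono\<close>)
qed

lemma FT_bessel:
  assumes f: "good d f" and S: "finite S" "S \<subseteq> Zd d"
  shows "(\<Sum>x\<in>S. \<Sum>k\<in>K d. (cmod (FT d f x k))^2) \<le> integral\<^sup>L (Th d) (\<lambda>\<theta>. \<Sum>k\<in>K d. (cmod (f \<theta> k))^2)"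
proof -
  obtain B where B: "\<And>\<theta> k. cmod (f \<theta> k) \<le> B" using goodD(2)[OF f] by blast
  have "(\<Sum>x\<in>S. \<Sum>k\<in>K d. (cmod (FT d f x k))^2) = (\<Sum>k\<in>K d. \<Sum>x\<in>S. (cmod (FT d f x k))^2)"
    by (rule sum.swap)
  also have "\<dots> \<le> (\<Sum>k\<in>K d. integral\<^sup>L (Th d) (\<lambda>\<theta>. (cmod (f \<theta> k))^2))"
  proof (rule sum_mono)
    fix k
    have "(\<Sum>x\<in>S. (cmod (FT d f x k))^2) = (\<Sum>x\<in>S. (cmod (integral\<^sup>L (Th d) (\<lambda>\<theta>. E d (\<lambda>j. - x j) \<theta> * f \<theta> k)))^2)"
      using S by (intro sum.cong refl) (auto simp: FT_def)
    also have "\<dots> \<le> integral\<^sup>L (Th d) (\<lambda>\<theta>. (cmod (f \<theta> k))^2)"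
      by (rule bessel_scalar[OF goodD(1)[OF f] B S])
    finally show "(\<Sum>x\<in>S. (cmod (FT d f x k))^2) \<le> integral\<^sup>L (Th d) (\<lambda>\<theta>. (cmod (f \<theta> k))^2)" .
  qed
  also have "\<dots> = integral\<^sup>L (Th d) (\<lambda>\<theta>. \<Sum>k\<in>K d. (cmod (f \<theta> k))^2)"
    by (rule Bochner_Integration.integral_sum[symmetric]) (rule good_sq_int[OF f])
  finally show ?thesis .
qed

lemma FT_l2:
  assumes f: "good d f"
  shows "FT d f \<in> l2space d"
proof (rule l2I)
  show "\<And>x. x \<notin> Zd d \<Longrightarrow> FT d f x = (\<lambda>_. 0)" by (auto simp: FT_def)
  show "\<And>x k. k \<notin> K d \<Longrightarrow> FT d f x k = 0" by (auto simp: FT_def goodD(3)[OF f])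
  show "(\<lambda>x. \<Sum>k\<in>K d. (cmod (FT d f x k))^2) summable_on Zd d"
  proof (rule nonneg_bdd_above_summable_on)
    show "bdd_above (sum (\<lambda>x. \<Sum>k\<in>K d. (cmod (FT d f x k))^2) ` {F. F \<subseteq> Zd d \<and> finite F})"
      by (rule bdd_aboveI[where M="integral\<^sup>L (Th d) (\<lambda>\<theta>. \<Sum>k\<in>K d. (cmod (f \<theta> k))^2)"])
        (auto intro: FT_bessel[OF f])
  qed (auto intro: sum_nonneg)
qed

lemma FT_nrm:
  assumes f: "good d f"
  shows "nrm d (FT d f) \<le> integral\<^sup>L (Th d) (\<lambda>\<theta>. \<Sum>k\<in>K d. (cmod (f \<theta> k))^2)"
  unfolding nrm_def
  by (rule infsum_le_finite_sums[OF l2D(3)[OF FT_l2[OF f]]]) (auto intro: FT_bessel[OF f])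

lemma FT_delta:
  assumes "\<And>k. k \<notin> K d \<Longrightarrow> \<phi> k = 0"
  shows "FT d (\<lambda>\<theta> k. \<phi> k) = delta0 \<phi>"
proof (intro ext)
  fix x k
  show "FT d (\<lambda>\<theta> k. \<phi> k) x k = delta0 \<phi> x k"
  proof (cases "x \<in> Zd d")
    case True
    have "FT d (\<lambda>\<theta> k. \<phi> k) x k = integral\<^sup>L (Th d) (E d (\<lambda>j. - x j)) * \<phi> k"
      using True by (simp add: FT_def)
    also have "\<dots> = (if (\<lambda>j. - x j) = (\<lambda>_. 0) then 1 else 0) * \<phi> k"
      by (simp add: int_E[OF Zd_neg[OF True]])
    also have "(\<lambda>j. - x j) = (\<lambda>_. 0) \<longleftrightarrow> x = (\<lambda>_. 0)" by (auto simp: fun_eq_iff)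
    finally show ?thesis by (simp add: delta0_def)
  next
    case False
    then have "x \<noteq> (\<lambda>_. 0)" by (auto simp: Zd_def)
    then show ?thesis using False by (simp add: FT_def delta0_def)
  qed
qed

lemma good_diff: "good d f \<Longrightarrow> good d g \<Longrightarrow> good d (\<lambda>\<theta> k. f \<theta> k - g \<theta> k)"
proof -
  assume f: "good d f" and g: "good d g"
  obtain B where B: "\<And>\<theta> k. cmod (f \<theta> k) \<le> B" using goodD(2)[OF f] by blast
  obtain C where C: "\<And>\<theta> k. cmod (g \<theta> k) \<le> C" using goodD(2)[OF g] by blast
  have "cmod (f \<theta> k - g \<theta> k) \<le> B + C" for \<theta> k
    by (rule order_trans[OF norm_triangle_ineq4]) (intro add_mono B C)
  then show ?thesis using goodD[OF f] goodD[OF g] unfolding good_def by auto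
qed

lemma good_add: "good d f \<Longrightarrow> good d g \<Longrightarrow> good d (\<lambda>\<theta> k. f \<theta> k + g \<theta> k)"
proof -
  assume f: "good d f" and g: "good d g"
  obtain B where B: "\<And>\<theta> k. cmod (f \<theta> k) \<le> B" using goodD(2)[OF f] by blast
  obtain C where C: "\<And>\<theta> k. cmod (g \<theta> k) \<le> C" using goodD(2)[OF g] by blast
  have "cmod (f \<theta> k + g \<theta> k) \<le> B + C" for \<theta> k
    by (rule order_trans[OF norm_triangle_ineq]) (intro add_mono B C)
  then show ?thesis using goodD[OF f] goodD[OF g] unfolding good_def by auto
qed

lemma good_cmult:
  assumes f: "good d f" and c: "c \<in> borel_measurable (Th d)" "\<And>\<theta>. cmod (c \<theta>) \<le> C"
  shows "good d (\<lambda>\<theta> k. c \<theta> * f \<theta> k)"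
proof -
  obtain B where B: "\<And>\<theta> k. cmod (f \<theta> k) \<le> B" using goodD(2)[OF f] by blast
  have C0: "0 \<le> C" using c(2)[of undefined] by (meson norm_ge_zero order_trans)
  have "cmod (c \<theta> * f \<theta> k) \<le> C * B" for \<theta> k
    unfolding norm_mult by (intro mult_mono c B C0) simp
  then show ?thesis using goodD[OF f] c unfolding good_def by auto
qed

lemma FT_diff:
  assumes f: "good d f" and g: "good d g"
  shows "FT d (\<lambda>\<theta> k. f \<theta> k - g \<theta> k) = (\<lambda>x k. FT d f x k - FT d g x k)"
proof (intro ext)
  fix x k
  have "(\<lambda>\<theta>. E d (\<lambda>j. - x j) \<theta> * (f \<theta> k - g \<theta> k)) = (\<lambda>\<theta>. E d (\<lambda>j. - x j) \<theta> * f \<theta> k - E d (\<lambda>j. - x j) \<theta> * g \<theta> k)"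
    by (auto simp: algebra_simps)
  then show "FT d (\<lambda>\<theta> k. f \<theta> k - g \<theta> k) x k = FT d f x k - FT d g x k"
    unfolding FT_def using good_intE[OF f] good_intE[OF g] by simp
qed

lemma FT_add:
  assumes f: "good d f" and g: "good d g"
  shows "FT d (\<lambda>\<theta> k. f \<theta> k + g \<theta> k) = (\<lambda>x k. FT d f x k + FT d g x k)"
proof (intro ext)
  fix x k
  have "(\<lambda>\<theta>. E d (\<lambda>j. - x j) \<theta> * (f \<theta> k + g \<theta> k)) = (\<lambda>\<theta>. E d (\<lambda>j. - x j) \<theta> * f \<theta> k + E d (\<lambda>j. - x j) \<theta> * g \<theta> k)"
    by (auto simp: algebra_simps)
  then show "FT d (\<lambda>\<theta> k. f \<theta> k + g \<theta> k) x k = FT d f x k + FT d g x k"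
    unfolding FT_def using good_intE[OF f] good_intE[OF g] by simp
qed

lemma shift_Zd: "shift_lazy d k \<in> Zd d"
  unfolding shift_lazy_def unitv_def Zd_def by auto

lemma int_grover:
  assumes "\<And>l. integrable M (g l)"
  shows "integral\<^sup>L M (\<lambda>\<theta>. grover D (\<lambda>l. g l \<theta>) k) = grover D (\<lambda>l. integral\<^sup>L M (g l)) k"
proof (cases "k \<in> {1..D}")
  case True
  have "integral\<^sup>L M (\<lambda>\<theta>. grover D (\<lambda>l. g l \<theta>) k) =
        integral\<^sup>L M (\<lambda>\<theta>. (2 / of_nat D) * (\<Sum>l=1..D. g l \<theta>) - g k \<theta>)"
    using True by (simp add: grover_def)
  also have "\<dots> = (2 / of_nat D) * (\<Sum>l=1..D. integral\<^sup>L M (g l)) - integral\<^sup>L M (g k)"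
    using assms by (simp add: Bochner_Integration.integral_sum)
  finally show ?thesis using True by (simp add: grover_def)
next
  case False
  then have "\<And>v. grover D v k = 0" unfolding grover_def by auto
  then show ?thesis by simp
qed

lemma grover_zero: "grover D (\<lambda>l. 0) k = 0"
  unfolding grover_def by simp

definition Uh :: "nat \<Rightarrow> ((nat \<Rightarrow> real) \<Rightarrow> nat \<Rightarrow> complex) \<Rightarrow> (nat \<Rightarrow> real) \<Rightarrow> nat \<Rightarrow> complex" where
  "Uh d f \<theta> k = E d (shift_lazy d k) \<theta> * grover (2*d+1) (f \<theta>) k"

definition Wop :: "nat \<Rightarrow> ((nat \<Rightarrow> int) \<Rightarrow> nat \<Rightarrow> complex) \<Rightarrow> (nat \<Rightarrow> int) \<Rightarrow> nat \<Rightarrow> complex" where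
  "Wop d r = (\<lambda>x k. if x \<in> Zd d then grover (2*d+1) (\<lambda>l. r (\<lambda>i. x i + shift_lazy d l i) l) k else 0)"

definition Wh :: "nat \<Rightarrow> ((nat \<Rightarrow> real) \<Rightarrow> nat \<Rightarrow> complex) \<Rightarrow> (nat \<Rightarrow> real) \<Rightarrow> nat \<Rightarrow> complex" where
  "Wh d f \<theta> k = grover (2*d+1) (\<lambda>l. E d (\<lambda>i. - shift_lazy d l i) \<theta> * f \<theta> l) k"

lemma U_FT:
  assumes f: "good d f"
  shows "U_lazy d (FT d f) = FT d (Uh d f)"
proof (intro ext)
  fix x k
  define s where "s = shift_lazy d k"
  define y where "y = (\<lambda>i. x i - s i)"
  have s: "s \<in> Zd d" unfolding s_def by (rule shift_Zd)
  have U: "U_lazy d (FT d f) x k = grover (2*d+1) (FT d f y) k"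
    unfolding U_lazy_def y_def s_def ..
  show "U_lazy d (FT d f) x k = FT d (Uh d f) x k"
  proof (cases "x \<in> Zd d")
    case True
    have y: "y \<in> Zd d" unfolding y_def by (rule Zd_diff[OF True s])
    define c where "c \<theta> = E d (\<lambda>j. - x j) \<theta> * E d s \<theta>" for \<theta>
    have cE: "c \<theta> = E d (\<lambda>j. - y j) \<theta>" for \<theta>
      unfolding c_def y_def E_mult by (simp add: algebra_simps)
    have FTy: "FT d f y = (\<lambda>l. integral\<^sup>L (Th d) (\<lambda>\<theta>. c \<theta> * f \<theta> l))"
      using y by (auto simp: FT_def cE fun_eq_iff)
    have cm: "c \<in> borel_measurable (Th d)" unfolding c_def by measurable
    have cb: "cmod (c \<theta>) \<le> 1" for \<theta> unfolding c_def by (simp add: norm_mult)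
    have "FT d (Uh d f) x k = integral\<^sup>L (Th d) (\<lambda>\<theta>. grover (2*d+1) (\<lambda>l. c \<theta> * f \<theta> l) k)"
      using True by (simp add: FT_def Uh_def grover_cmult c_def s_def mult.assoc)
    also have "\<dots> = grover (2*d+1) (\<lambda>l. integral\<^sup>L (Th d) (\<lambda>\<theta>. c \<theta> * f \<theta> l)) k"
      by (rule int_grover) (rule good_int[OF f cm cb])
    finally show ?thesis unfolding U FTy by simp
  next
    case False
    have "y \<notin> Zd d"
    proof
      assume "y \<in> Zd d"
      from Zd_add[OF this s] have "x \<in> Zd d" unfolding y_def by simp
      with False show False by simp
    qed
    then have "FT d f y = (\<lambda>l. 0)" by (simp add: FT_def)
    then show ?thesis unfolding U using False by (simp add: FT_def grover_zero)
  qed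
qed

lemma W_FT:
  assumes f: "good d f"
  shows "Wop d (FT d f) = FT d (Wh d f)"
proof (intro ext)
  fix x k
  show "Wop d (FT d f) x k = FT d (Wh d f) x k"
  proof (cases "x \<in> Zd d")
    case True
    define c where "c l \<theta> = E d (\<lambda>j. - x j) \<theta> * E d (\<lambda>i. - shift_lazy d l i) \<theta>" for l \<theta>
    have cE: "c l \<theta> = E d (\<lambda>j. - (x j + shift_lazy d l j)) \<theta>" for l \<theta>
      unfolding c_def E_mult by (simp add: algebra_simps)
    have xs: "(\<lambda>i. x i + shift_lazy d l i) \<in> Zd d" for l by (rule Zd_add[OF True shift_Zd])
    have FTs: "FT d f (\<lambda>i. x i + shift_lazy d l i) l = integral\<^sup>L (Th d) (\<lambda>\<theta>. c l \<theta> * f \<theta> l)" for l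
      using xs[of l] by (simp add: FT_def cE)
    have cm: "c l \<in> borel_measurable (Th d)" for l unfolding c_def by measurable
    have cb: "cmod (c l \<theta>) \<le> 1" for l \<theta> unfolding c_def by (simp add: norm_mult)
    have "FT d (Wh d f) x k = integral\<^sup>L (Th d) (\<lambda>\<theta>. grover (2*d+1) (\<lambda>l. c l \<theta> * f \<theta> l) k)"
      using True by (simp add: FT_def Wh_def grover_cmult[symmetric] c_def mult.assoc)
    also have "\<dots> = grover (2*d+1) (\<lambda>l. integral\<^sup>L (Th d) (\<lambda>\<theta>. c l \<theta> * f \<theta> l)) k"
      by (rule int_grover) (rule good_int[OF f cm cb])
    finally show ?thesis using True by (simp add: Wop_def FTs)
  next
    case False
    then show ?thesis by (simp add: FT_def Wop_def)
  qed
qed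

lemma bij_shift:
  assumes "s \<in> Zd d"
  shows "bij_betw (\<lambda>y. \<lambda>i. y i + s i) (Zd d) (Zd d)"
  by (rule bij_betw_byWitness[where f'="\<lambda>y. \<lambda>i. y i - s i"])
     (use assms in \<open>auto intro: Zd_add Zd_diff\<close>)

lemma sum_K_le: "k \<in> K d \<Longrightarrow> (cmod (u k))^2 \<le> (\<Sum>l\<in>K d. (cmod (u l))^2)"
  by (rule member_le_sum) (auto simp: K_def)

lemma grover_bound: "cmod (grover (2*d+1) u k) \<le> 3 * (\<Sum>l\<in>K d. cmod (u l))"
proof (cases "k \<in> K d")
  case True
  have D0: "cmod (2 / of_nat (2*d+1) :: complex) = 2 / real (2*d+1)"
    by (simp only: norm_divide norm_numeral norm_of_nat)
  have D: "cmod (2 / of_nat (2*d+1) :: complex) \<le> 2"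
    unfolding D0 by (simp add: field_simps)
  have "cmod (grover (2*d+1) u k) = cmod ((2 / of_nat (2*d+1)) * (\<Sum>l=1..2*d+1. u l) - u k)"
    using True by (simp add: grover_def K_def)
  also have "\<dots> \<le> cmod ((2 / of_nat (2*d+1)) * (\<Sum>l=1..2*d+1. u l)) + cmod (u k)"
    by (rule norm_triangle_ineq4)
  also have "\<dots> \<le> 2 * (\<Sum>l\<in>K d. cmod (u l)) + (\<Sum>l\<in>K d. cmod (u l))"
  proof (rule add_mono)
    show "cmod ((2 / of_nat (2*d+1)) * (\<Sum>l=1..2*d+1. u l)) \<le> 2 * (\<Sum>l\<in>K d. cmod (u l))"
      unfolding norm_mult K_def by (intro mult_mono D norm_sum) auto
    show "cmod (u k) \<le> (\<Sum>l\<in>K d. cmod (u l))"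
      using True by (intro member_le_sum) (auto simp: K_def)
  qed
  finally show ?thesis by simp
next
  case False
  then have "grover (2*d+1) u k = 0" unfolding grover_def K_def by auto
  then show ?thesis by (simp add: sum_nonneg)
qed

lemma term_summable:
  assumes a: "a \<in> l2space d" and b: "(\<lambda>y. \<Sum>l\<in>K d. (cmod (b y l))^2) summable_on Zd d"
  shows "(\<lambda>y. a y k * cnj (grover (2*d+1) (b y) k)) summable_on Zd d"
proof -
  define A where "A y = (\<Sum>l\<in>K d. (cmod (a y l))^2)" for y
  define B where "B y = (\<Sum>l\<in>K d. (cmod (b y l))^2)" for y
  have As: "A summable_on Zd d" unfolding A_def by (rule l2D(3)[OF a])
  have Bs: "B summable_on Zd d" unfolding B_def by (rule b)
  have Ak: "(cmod (a y k))^2 \<le> A y" for y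
    using l2D(2)[OF a, of k y] sum_K_le[of k d "a y"] unfolding A_def
    by (cases "k \<in> K d") (auto intro: sum_nonneg)
  have S: "(\<lambda>y. 3/2 * (real (card (K d)) * A y + B y)) summable_on Zd d"
    by (intro summable_on_cmult_right summable_on_add As Bs)
  have "(\<lambda>y. norm (a y k * cnj (grover (2*d+1) (b y) k))) summable_on Zd d"
  proof (rule summable_on_comparison_test[OF S])
    fix y
    have "norm (a y k * cnj (grover (2*d+1) (b y) k)) \<le> cmod (a y k) * (3 * (\<Sum>l\<in>K d. cmod (b y l)))"
      unfolding norm_mult complex_mod_cnj by (intro mult_left_mono grover_bound) auto
    also have "\<dots> = 3 * (\<Sum>l\<in>K d. cmod (a y k) * cmod (b y l))"
      by (simp add: sum_distrib_left mult_ac)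
    also have "\<dots> \<le> 3 * (\<Sum>l\<in>K d. ((cmod (a y k))^2 + (cmod (b y l))^2) / 2)"
      using prod_le_sq[of 1] by (intro mult_left_mono sum_mono) auto
    also have "\<dots> = 3/2 * (real (card (K d)) * (cmod (a y k))^2 + B y)"
      unfolding B_def by (simp add: sum.distrib sum_divide_distrib[symmetric] algebra_simps)
    also have "\<dots> \<le> 3/2 * (real (card (K d)) * A y + B y)"
      using Ak[of y] by (intro mult_left_mono add_right_mono) auto
    finally show "norm (a y k * cnj (grover (2*d+1) (b y) k)) \<le> 3/2 * (real (card (K d)) * A y + B y)" .
  qed auto
  then show ?thesis by (simp add: summable_on_iff_abs_summable_on_complex)
qed

lemma grover_adj: "(\<Sum>k\<in>K d. grover (2*d+1) v k * cnj (u k)) = (\<Sum>k\<in>K d. v k * cnj (grover (2*d+1) u k))"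
proof -
  define c :: complex where "c = 2 / of_nat (2*d+1)"
  define S where "S = (\<Sum>l\<in>K d. v l)"
  define T where "T = (\<Sum>l\<in>K d. cnj (u l))"
  have "(\<Sum>k\<in>K d. grover (2*d+1) v k * cnj (u k)) = (\<Sum>k\<in>K d. c * S * cnj (u k) - v k * cnj (u k))"
    by (intro sum.cong refl) (auto simp: grover_def K_def algebra_simps c_def S_def)
  also have "\<dots> = c * S * T - (\<Sum>k\<in>K d. v k * cnj (u k))"
    unfolding T_def by (simp add: sum_subtractf sum_distrib_left)
  also have "\<dots> = (\<Sum>k\<in>K d. v k * (c * T)) - (\<Sum>k\<in>K d. v k * cnj (u k))"
    unfolding S_def by (simp add: sum_distrib_right sum_distrib_left mult_ac)
  also have "\<dots> = (\<Sum>k\<in>K d. v k * (c * T) - v k * cnj (u k))"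
    by (simp add: sum_subtractf)
  also have "\<dots> = (\<Sum>k\<in>K d. v k * cnj (grover (2*d+1) u k))"
    by (intro sum.cong refl) (auto simp: grover_def K_def algebra_simps c_def T_def)
  finally show ?thesis .
qed

lemma shift_sq_summable:
  assumes e: "e \<in> l2space d" and s: "s \<in> Zd d"
  shows "(\<lambda>y. \<Sum>l\<in>K d. (cmod (e (\<lambda>i. y i - s i) l))^2) summable_on Zd d"
proof -
  have "bij_betw (\<lambda>y. \<lambda>i. y i - s i) (Zd d) (Zd d)"
    by (rule bij_betw_byWitness[where f'="\<lambda>y. \<lambda>i. y i + s i"])
       (use s in \<open>auto intro: Zd_add Zd_diff\<close>)
  from summable_on_reindex_bij_betw[OF this, of "\<lambda>y. \<Sum>l\<in>K d. (cmod (e y l))^2"] l2D(3)[OF e]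
  show ?thesis by simp
qed

lemma adjoint:
  assumes r: "r \<in> l2space d" and e: "e \<in> l2space d"
  shows "l2inner d (Wop d r) e = l2inner d r (U_lazy d e)"
proof -
  define s where "s l = shift_lazy d l" for l
  have s: "s l \<in> Zd d" for l unfolding s_def by (rule shift_Zd)
  define F where "F k y = r y k * cnj (grover (2*d+1) (e (\<lambda>i. y i - s k i)) k)" for k y
  have Fs: "F k summable_on Zd d" for k
    unfolding F_def by (rule term_summable[OF r shift_sq_summable[OF e s]])
  have bij: "bij_betw (\<lambda>x. \<lambda>i. x i + s k i) (Zd d) (Zd d)" for k by (rule bij_shift[OF s])
  have G: "(\<lambda>x. F k (\<lambda>i. x i + s k i)) = (\<lambda>x. r (\<lambda>i. x i + s k i) k * cnj (grover (2*d+1) (e x) k))" for k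
    unfolding F_def by auto
  have Gs: "(\<lambda>x. r (\<lambda>i. x i + s k i) k * cnj (grover (2*d+1) (e x) k)) summable_on Zd d" for k
    using summable_on_reindex_bij_betw[OF bij[of k], of "F k"] Fs[of k] unfolding G by simp
  have "l2inner d (Wop d r) e = infsum (\<lambda>x. \<Sum>k\<in>K d. grover (2*d+1) (\<lambda>l. r (\<lambda>i. x i + s l i) l) k * cnj (e x k)) (Zd d)"
    unfolding l2inner_K by (intro infsum_cong) (simp add: Wop_def s_def)
  also have "\<dots> = infsum (\<lambda>x. \<Sum>k\<in>K d. r (\<lambda>i. x i + s k i) k * cnj (grover (2*d+1) (e x) k)) (Zd d)"
    by (simp only: grover_adj)
  also have "\<dots> = (\<Sum>k\<in>K d. infsum (\<lambda>x. r (\<lambda>i. x i + s k i) k * cnj (grover (2*d+1) (e x) k)) (Zd d))"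
    by (intro infsum_sum_fin Gs) (simp add: K_def)
  also have "\<dots> = (\<Sum>k\<in>K d. infsum (F k) (Zd d))"
    by (intro sum.cong refl) (simp only: G[symmetric] infsum_reindex_bij_betw[OF bij])
  also have "\<dots> = infsum (\<lambda>y. \<Sum>k\<in>K d. F k y) (Zd d)"
    by (intro infsum_sum_fin[symmetric] Fs) (simp add: K_def)
  also have "\<dots> = l2inner d r (U_lazy d e)"
    unfolding l2inner_K F_def U_lazy_def s_def ..
  finally show ?thesis .
qed

definition av :: "nat \<Rightarrow> (nat \<Rightarrow> complex) \<Rightarrow> nat \<Rightarrow> complex" where
  "av d z k = (if k \<in> {1..d} then z k else if k \<in> {d+2..2*d+1} then cnj (z (k-(d+1))) else 1)"

definition vv :: "nat \<Rightarrow> (nat \<Rightarrow> complex) \<Rightarrow> nat \<Rightarrow> complex" where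
  "vv d z k = (if k = d+1 then 1/2 else if k \<in> {1..d} then z k / (1 + z k)
      else if k \<in> {d+2..2*d+1} then 1 / (1 + z (k - (d+1))) else 0)"

lemma wo_vv: "\<not> (\<exists>j\<in>{1..d}. z j = -1) \<Longrightarrow> wo d z k = (1 / complex_of_real (Dz d z)) * vv d z k"
  unfolding wo_def vv_def by simp

lemma wo_deg: "(\<exists>j\<in>{1..d}. z j = -1) \<Longrightarrow> wo d z k = 0"
  unfolding wo_def by simp

lemma sumK_split: "(\<Sum>k\<in>K d. f k) = (\<Sum>j=1..d. f j) + f (d+1) + (\<Sum>j=1..d. f (d+1+j))"
proof -
  have d1: "K d = ({1..d} \<union> {d+1}) \<union> {d+2..2*d+1}" unfolding K_def by auto
  have "sum f (K d) = sum f ({1..d} \<union> {d+1}) + sum f {d+2..2*d+1}"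
    unfolding d1 by (rule sum.union_disjoint) auto
  also have "sum f ({1..d} \<union> {d+1}) = sum f {1..d} + sum f {d+1}"
    by (rule sum.union_disjoint) auto
  also have "sum f {d+1} = f (d+1)" by simp
  also have "(\<Sum>k\<in>{d+2..2*d+1}. f k) = (\<Sum>j=1..d. f (d+1+j))"
  proof -
    have "{d+2..2*d+1} = (\<lambda>j. d+1+j) ` {1..d}"
    proof
      show "{d+2..2*d+1} \<subseteq> (\<lambda>j. d+1+j) ` {1..d}"
      proof
        fix k assume "k \<in> {d+2..2*d+1}"
        then show "k \<in> (\<lambda>j. d+1+j) ` {1..d}" by (intro image_eqI[of _ _ "k-(d+1)"]) auto
      qed
    qed auto
    then show ?thesis by (simp add: sum.reindex inj_on_def)
  qed
  finally show ?thesis .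
qed

lemma av_simps:
  "j \<in> {1..d} \<Longrightarrow> av d z j = z j"
  "av d z (d+1) = 1"
  "j \<in> {1..d} \<Longrightarrow> av d z (d+1+j) = cnj (z j)"
  unfolding av_def by auto

lemma vv_simps:
  "j \<in> {1..d} \<Longrightarrow> vv d z j = z j / (1 + z j)"
  "vv d z (d+1) = 1/2"
  "j \<in> {1..d} \<Longrightarrow> vv d z (d+1+j) = 1 / (1 + z j)"
  unfolding vv_def by auto

lemma av_simps':
  "av d z (Suc d) = 1"
  "j \<in> {1..d} \<Longrightarrow> av d z (Suc (d+j)) = cnj (z j)"
  unfolding av_def by auto

lemma vv_simps':
  "vv d z (Suc d) = 1/2"
  "j \<in> {1..d} \<Longrightarrow> vv d z (Suc (d+j)) = 1 / (1 + z j)"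
  unfolding vv_def by auto

lemma vv_out: "k \<notin> K d \<Longrightarrow> vv d z k = 0"
  unfolding vv_def K_def by auto

lemma one_plus_ne: "z \<noteq> -1 \<Longrightarrow> 1 + z \<noteq> (0::complex)"
  by (metis add.commute add_eq_0_iff)

lemma vv_sum:
  assumes nd: "\<And>j. j \<in> {1..d} \<Longrightarrow> z j \<noteq> -1"
  shows "(\<Sum>k\<in>K d. vv d z k) = of_nat d + 1/2"
proof -
  have "(\<Sum>k\<in>K d. vv d z k) = (\<Sum>j=1..d. z j / (1 + z j)) + 1/2 + (\<Sum>j=1..d. 1 / (1 + z j))"
    unfolding sumK_split by (simp add: vv_simps vv_simps')
  also have "\<dots> = (\<Sum>j=1..d. z j / (1 + z j) + 1 / (1 + z j)) + 1/2"
    by (simp add: sum.distrib)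
  also have "(\<Sum>j=1..d. z j / (1 + z j) + 1 / (1 + z j)) = (\<Sum>j=1..d. (1::complex))"
  proof (rule sum.cong[OF refl])
    fix j assume "j \<in> {1..d}"
    then have "1 + z j \<noteq> 0" using nd one_plus_ne by blast
    then show "z j / (1 + z j) + 1 / (1 + z j) = 1" by (simp add: field_simps)
  qed
  finally show ?thesis by simp
qed

lemma cnj_unit: "cmod w = 1 \<Longrightarrow> cnj w = 1 / w"
proof -
  assume "cmod w = 1"
  then have "w * cnj w = 1" by (metis complex_norm_square of_real_1 power_one)
  then show "cnj w = 1 / w" by (metis divide_self_if mult_zero_left nonzero_mult_div_cancel_left zero_neq_one)
qed

lemma sq_inv: "cmod w = 1 \<Longrightarrow> (cmod (w / (1 + w)))^2 = 1 / (cmod (1 + w))^2"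
  by (simp add: norm_divide power_divide)

lemma Dz_sq: "(Dz d z)^2 = 1/4 + 2 * (\<Sum>j=1..d. 1 / (cmod (1 + z j))^2)"
  unfolding Dz_def by (simp add: sum_nonneg)

lemma Dz_pos: "Dz d z > 0"
  unfolding Dz_def by (simp add: sum_nonneg add_pos_nonneg)

lemma vv_norm:
  assumes hz: "\<And>j. j \<in> {1..d} \<Longrightarrow> cmod (z j) = 1"
  shows "(\<Sum>k\<in>K d. (cmod (vv d z k))^2) = (Dz d z)^2"
proof -
  have "(\<Sum>k\<in>K d. (cmod (vv d z k))^2) =
        (\<Sum>j=1..d. (cmod (z j / (1 + z j)))^2) + 1/4 + (\<Sum>j=1..d. (cmod (1 / (1 + z j)))^2)"
    unfolding sumK_split by (simp add: vv_simps vv_simps' power_divide)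
  also have "(\<Sum>j=1..d. (cmod (z j / (1 + z j)))^2) = (\<Sum>j=1..d. 1 / (cmod (1 + z j))^2)"
    by (intro sum.cong refl) (simp add: sq_inv hz)
  also have "(\<Sum>j=1..d. (cmod (1 / (1 + z j)))^2) = (\<Sum>j=1..d. 1 / (cmod (1 + z j))^2)"
    by (intro sum.cong refl) (simp add: norm_divide power_divide)
  finally show ?thesis unfolding Dz_sq by simp
qed

lemma wo_norm:
  assumes hz: "\<And>j. j \<in> {1..d} \<Longrightarrow> cmod (z j) = 1" and nd: "\<And>j. j \<in> {1..d} \<Longrightarrow> z j \<noteq> -1"
  shows "(\<Sum>k\<in>K d. (cmod (wo d z k))^2) = 1"
proof -
  have nd': "\<not> (\<exists>j\<in>{1..d}. z j = -1)" using nd by blast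
  have "(\<Sum>k\<in>K d. (cmod (wo d z k))^2) = (\<Sum>k\<in>K d. (cmod (vv d z k))^2) / (Dz d z)^2"
    unfolding wo_vv[OF nd'] using Dz_pos[of d z]
    by (simp add: norm_mult norm_divide power_divide sum_divide_distrib)
  also have "\<dots> = 1" using vv_norm[OF hz] Dz_pos[of d z] by simp
  finally show ?thesis .
qed

lemma wo_le1:
  assumes hz: "\<And>j. j \<in> {1..d} \<Longrightarrow> cmod (z j) = 1"
  shows "cmod (wo d z k) \<le> 1"
proof (cases "\<exists>j\<in>{1..d}. z j = -1")
  case True then show ?thesis by (simp add: wo_deg)
next
  case False
  then have nd: "\<And>j. j \<in> {1..d} \<Longrightarrow> z j \<noteq> -1" by blast
  show ?thesis
  proof (cases "k \<in> K d")
    case True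
    have "(cmod (wo d z k))^2 \<le> (\<Sum>k\<in>K d. (cmod (wo d z k))^2)"
      by (rule member_le_sum) (use True in \<open>auto simp: K_def\<close>)
    then have "(cmod (wo d z k))^2 \<le> 1^2" using wo_norm[OF hz nd] by simp
    then show ?thesis by (rule power2_le_imp_le) simp
  next
    case False then show ?thesis by (simp add: wo_vv[OF \<open>\<not> (\<exists>j\<in>{1..d}. z j = -1)\<close>] vv_out)
  qed
qed

lemma K_cases:
  assumes "k \<in> K d"
  obtains (A) "k \<in> {1..d}" | (B) "k = d+1" | (C) j where "j \<in> {1..d}" "k = d+1+j"
proof -
  consider "k \<in> {1..d}" | "k = d+1" | "k \<in> {d+2..2*d+1}" using assms unfolding K_def by force
  then show ?thesis
  proof cases
    case 3
    then have "k-(d+1) \<in> {1..d}" "k = d+1+(k-(d+1))" by auto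
    then show ?thesis by (rule C)
  qed (use A B in auto)
qed

lemma av_norm:
  assumes hz: "\<And>j. j \<in> {1..d} \<Longrightarrow> cmod (z j) = 1"
  shows "cmod (av d z k) = 1"
proof (cases "k \<in> K d")
  case True
  then show ?thesis
  proof (cases rule: K_cases)
    case A then show ?thesis by (simp add: av_simps hz)
  next
    case B then show ?thesis by (simp add: av_simps av_simps')
  next
    case (C j) then show ?thesis by (simp add: av_simps av_simps' hz)
  qed
next
  case False
  then have "av d z k = 1" unfolding av_def K_def by auto
  then show ?thesis by simp
qed

lemma av_cnj_mult:
  assumes hz: "\<And>j. j \<in> {1..d} \<Longrightarrow> cmod (z j) = 1"
  shows "cnj (av d z k) * av d z k = 1"
proof -
  have "cnj (av d z k) * av d z k = complex_of_real ((cmod (av d z k))^2)"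
    by (subst complex_norm_square) (rule mult.commute)
  also have "\<dots> = 1" using av_norm[where d=d and z=z and k=k, OF hz] by simp
  finally show ?thesis .
qed

lemma av_ne:
  assumes nd: "\<And>j. j \<in> {1..d} \<Longrightarrow> z j \<noteq> -1" and k: "k \<in> K d"
  shows "1 + av d z k \<noteq> 0"
  using k
proof (cases rule: K_cases)
  case A then show ?thesis using nd[of k] by (simp add: av_simps one_plus_ne)
next
  case B then show ?thesis by (simp add: av_simps av_simps')
next
  case (C j)
  have "cnj (z j) \<noteq> -1"
  proof
    assume "cnj (z j) = -1"
    then have "cnj (cnj (z j)) = cnj (-1)" by simp
    then have "z j = -1" by simp
    with nd[OF C(1)] show False by simp
  qed
  then show ?thesis using C by (simp add: av_simps av_simps' one_plus_ne)
qed

lemma av_vv: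
  assumes hz: "\<And>j. j \<in> {1..d} \<Longrightarrow> cmod (z j) = 1" and nd: "\<And>j. j \<in> {1..d} \<Longrightarrow> z j \<noteq> -1"
    and k: "k \<in> K d"
  shows "1 / (1 + av d z k) = cnj (vv d z k)"
  using k
proof (cases rule: K_cases)
  case A
  have z0: "z k \<noteq> 0" using hz[OF A] by auto
  have z1: "1 + z k \<noteq> 0" using nd[OF A] one_plus_ne by blast
  have "cnj (vv d z k) = cnj (z k) / (1 + cnj (z k))" using A by (simp add: vv_simps)
  also have "\<dots> = (1 / z k) / (1 + 1 / z k)" by (simp add: cnj_unit[OF hz[OF A]])
  also have "\<dots> = 1 / (1 + z k)" using z0 z1 by (simp add: field_simps)
  finally show ?thesis using A by (simp add: av_simps)
next
  case B then show ?thesis by (simp add: av_simps vv_simps av_simps' vv_simps')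
next
  case (C j) then show ?thesis by (simp add: av_simps vv_simps av_simps' vv_simps')
qed

lemma grover_vv:
  assumes nd: "\<And>j. j \<in> {1..d} \<Longrightarrow> z j \<noteq> -1" and k: "k \<in> K d"
  shows "grover (2*d+1) (vv d z) k = 1 - vv d z k"
proof -
  have "(\<Sum>l=1..2*d+1. vv d z l) = of_nat d + 1/2" using vv_sum[where d=d and z=z, OF nd] by (simp add: K_def)
  moreover have "(2 / of_nat (2*d+1)) * (of_nat d + 1/2) = (1::complex)"
  proof -
    have a: "(2::complex) * (of_nat d + 1/2) = of_nat (2*d+1)" by simp
    have b: "(of_nat (2*d+1) :: complex) \<noteq> 0" using of_nat_neq_0[of "2*d", where 'a=complex] by simp
    have "(2 / of_nat (2*d+1)) * (of_nat d + 1/2) = (2 * (of_nat d + 1/2)) / (of_nat (2*d+1) :: complex)"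
      by simp
    also have "\<dots> = 1" unfolding a using b by simp
    finally show ?thesis .
  qed
  ultimately show ?thesis using k by (simp add: grover_def K_def)
qed

lemma eigen:
  assumes hz: "\<And>j. j \<in> {1..d} \<Longrightarrow> cmod (z j) = 1"
  shows "av d z k * grover (2*d+1) (wo d z) k = wo d z k"
proof (cases "\<exists>j\<in>{1..d}. z j = -1")
  case True
  then have "wo d z = (\<lambda>l. 0)" by (simp add: wo_deg fun_eq_iff)
  then show ?thesis using True by (simp add: grover_zero wo_deg)
next
  case False
  then have nd: "\<And>j. j \<in> {1..d} \<Longrightarrow> z j \<noteq> -1" by blast
  define c where "c = 1 / complex_of_real (Dz d z)"
  have w: "wo d z = (\<lambda>l. c * vv d z l)" unfolding c_def by (simp add: wo_vv[OF False] fun_eq_iff)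
  have key: "av d z k * grover (2*d+1) (vv d z) k = vv d z k"
  proof (cases "k \<in> K d")
    case True
    show ?thesis using True
    proof (cases rule: K_cases)
      case A
      have z1: "1 + z k \<noteq> 0" using nd[OF A] one_plus_ne by blast
      have g: "grover (2*d+1) (vv d z) k = 1 - z k / (1 + z k)"
        using grover_vv[where d=d and z=z, OF nd True] A by (simp add: vv_simps)
      have "z k * (1 - z k / (1 + z k)) = z k / (1 + z k)" using z1 by (simp add: field_simps)
      then show ?thesis using A g by (simp add: av_simps vv_simps)
    next
      case B
      have g: "grover (2*d+1) (vv d z) (d+1) = 1 - vv d z (d+1)" 
      proof -
        have "d+1 \<in> K d" unfolding K_def by simp
        from grover_vv[where d=d and z=z, OF nd this] show ?thesis .
      qed
      show ?thesis using B g by (simp add: av_simps vv_simps av_simps' vv_simps')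
    next
      case (C j)
      have z1: "1 + z j \<noteq> 0" using nd[OF C(1)] one_plus_ne by blast
      have zz: "cnj (z j) * z j = 1"
      proof -
        have "cnj (z j) * z j = complex_of_real ((cmod (z j))^2)"
          by (subst complex_norm_square) (rule mult.commute)
        also have "\<dots> = 1" using hz[OF C(1)] by simp
        finally show ?thesis .
      qed
      have g: "grover (2*d+1) (vv d z) k = 1 - vv d z k" using grover_vv[where d=d and z=z, OF nd True] .
      have "av d z k * grover (2*d+1) (vv d z) k = cnj (z j) * (1 - 1 / (1 + z j))"
        unfolding g using C by (simp add: av_simps' vv_simps')
      also have "\<dots> = cnj (z j) * z j / (1 + z j)" using z1 by (simp add: field_simps)
      also have "\<dots> = vv d z k" using C zz by (simp add: vv_simps vv_simps')
      finally show ?thesis .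
    qed
  next
    case False
    then have "grover (2*d+1) (vv d z) k = 0" "vv d z k = 0" unfolding grover_def K_def
      by (auto simp: vv_out[OF False])
    then show ?thesis by simp
  qed
  show ?thesis unfolding w grover_cmult using key by (simp add: mult.left_commute)
qed

lemma y_orth:
  assumes hz: "\<And>j. j \<in> {1..d} \<Longrightarrow> cmod (z j) = 1" and nd: "\<And>j. j \<in> {1..d} \<Longrightarrow> z j \<noteq> -1"
  shows "(\<Sum>k\<in>K d. (\<phi> k - cinner_fin (2*d+1) \<phi> (wo d z) * wo d z k) / (1 + av d z k)) = 0"
proof -
  have nd': "\<not> (\<exists>j\<in>{1..d}. z j = -1)" using nd by blast
  define D where "D = complex_of_real (Dz d z)"
  have D0: "D \<noteq> 0" unfolding D_def using Dz_pos[of d z] by simp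
  have inv: "1 / (1 + av d z k) = D * cnj (wo d z k)" if "k \<in> K d" for k
  proof -
    have "1 / (1 + av d z k) = cnj (vv d z k)" by (rule av_vv[where d=d and z=z, OF hz nd that])
    also have "\<dots> = D * cnj (wo d z k)"
      unfolding wo_vv[OF nd'] D_def using Dz_pos[of d z] by simp
    finally show ?thesis .
  qed
  define c where "c = cinner_fin (2*d+1) \<phi> (wo d z)"
  have c: "c = (\<Sum>k\<in>K d. \<phi> k * cnj (wo d z k))" unfolding c_def cinner_fin_def K_def ..
  have n: "(\<Sum>k\<in>K d. wo d z k * cnj (wo d z k)) = 1"
    using wo_norm[where d=d and z=z, OF hz nd] by (simp only: complex_norm_square[symmetric] of_real_sum[symmetric]) simp
  have "(\<Sum>k\<in>K d. (\<phi> k - c * wo d z k) / (1 + av d z k)) = (\<Sum>k\<in>K d. (\<phi> k - c * wo d z k) * (D * cnj (wo d z k)))"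
    by (intro sum.cong refl) (metis inv times_divide_eq_right mult_1_right)
  also have "\<dots> = D * ((\<Sum>k\<in>K d. \<phi> k * cnj (wo d z k)) - c * (\<Sum>k\<in>K d. wo d z k * cnj (wo d z k)))"
    by (simp add: algebra_simps sum_subtractf sum_distrib_left)
  also have "\<dots> = 0" unfolding n c[symmetric] by simp
  finally show ?thesis unfolding c_def .
qed

lemma Wr:
  assumes hz: "\<And>j. j \<in> {1..d} \<Longrightarrow> cmod (z j) = 1" and nd: "\<And>j. j \<in> {1..d} \<Longrightarrow> z j \<noteq> -1"
    and u0: "\<And>k. k \<notin> K d \<Longrightarrow> u k = 0"
    and us: "(\<Sum>k\<in>K d. u k / (1 + av d z k)) = 0"
  shows "grover (2*d+1) (\<lambda>l. cnj (av d z l) * (- av d z l * u l / (1 + av d z l))) k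
          - (- av d z k * u k / (1 + av d z k)) = u k"
proof -
  have t: "cnj (av d z l) * (- av d z l * u l / (1 + av d z l)) = - (u l / (1 + av d z l))" for l
  proof -
    have a: "cnj (av d z l) * av d z l = 1" by (rule av_cnj_mult[where d=d and z=z, OF hz])
    have "cnj (av d z l) * (- av d z l * u l / (1 + av d z l)) = - (cnj (av d z l) * av d z l) * u l / (1 + av d z l)"
      by (simp add: algebra_simps)
    then show ?thesis unfolding a by simp
  qed
  have s: "(\<Sum>l=1..2*d+1. - (u l / (1 + av d z l))) = 0"
    using us by (simp add: sum_negf K_def)
  show ?thesis
  proof (cases "k \<in> K d")
    case True
    have ne: "1 + av d z k \<noteq> 0" by (rule av_ne[where d=d and z=z, OF nd True])
    have "grover (2*d+1) (\<lambda>l. cnj (av d z l) * (- av d z l * u l / (1 + av d z l))) k = u k / (1 + av d z k)"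
      unfolding t using True s by (simp add: grover_def K_def)
    then show ?thesis using ne by (simp add: field_simps)
  next
    case False
    then show ?thesis using u0[OF False] unfolding grover_def K_def by auto
  qed
qed

lemma Zm_in: "j \<in> {1..d} \<Longrightarrow> Zm d \<theta> j = cis (\<theta> j)"
  unfolding Zm_def by simp

lemma Zm_norm: "j \<in> {1..d} \<Longrightarrow> cmod (Zm d \<theta> j) = 1"
  by (simp add: Zm_in)

lemma Zm_comp_meas[measurable]: "(\<lambda>\<theta>. Zm d \<theta> j) \<in> borel_measurable (Th d)"
proof (cases "j \<in> {1..d}")
  case True
  then show ?thesis by (simp add: Zm_in)
next
  case False
  then have "(\<lambda>\<theta>. Zm d \<theta> j) = (\<lambda>\<theta>. undefined)" unfolding Zm_def by auto
  then show ?thesis by simp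
qed

lemma wo_meas[measurable]: "(\<lambda>\<theta>. wo d (Zm d \<theta>) k) \<in> borel_measurable (Th d)"
  unfolding wo_def Dz_def by measurable

lemma av_meas[measurable]: "(\<lambda>\<theta>. av d (Zm d \<theta>) k) \<in> borel_measurable (Th d)"
  unfolding av_def by measurable

lemma E_shift: "E d (shift_lazy d k) \<theta> = av d (Zm d \<theta>) k"
proof -
  consider "k \<in> {1..d}" | "k \<in> {d+2..2*d+1}" | "k \<notin> {1..d}" "k \<notin> {d+2..2*d+1}" by blast
  then show ?thesis
  proof cases
    case 1
    have "(\<Sum>j=1..d. real_of_int (unitv k j) * \<theta> j) = (\<Sum>j\<in>{1..d}. if j = k then \<theta> j else 0)"
      by (intro sum.cong refl) (simp add: unitv_def)
    also have "\<dots> = \<theta> k" using 1 by simp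
    finally show ?thesis using 1 by (simp add: E_def shift_lazy_def av_def Zm_in)
  next
    case 2
    define j where "j = k - (d+1)"
    have j: "j \<in> {1..d}" using 2 unfolding j_def by auto
    have "(\<Sum>i=1..d. real_of_int (- unitv j i) * \<theta> i) = (\<Sum>i\<in>{1..d}. if i = j then - \<theta> i else 0)"
      by (intro sum.cong refl) (simp add: unitv_def)
    also have "\<dots> = - \<theta> j" using j by simp
    finally have s: "(\<Sum>i=1..d. real_of_int (- unitv j i) * \<theta> i) = - \<theta> j" .
    have nk: "k \<notin> {1..d}" using 2 by auto
    show ?thesis using 2 nk s j unfolding j_def by (simp add: E_def shift_lazy_def av_def Zm_in cis_cnj)
  next
    case 3
    have a: "shift_lazy d k = (\<lambda>_. 0)" unfolding shift_lazy_def by (simp only: if_not_P[OF 3(1)] if_not_P[OF 3(2)])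
    have b: "av d (Zm d \<theta>) k = 1" unfolding av_def by (simp only: if_not_P[OF 3(1)] if_not_P[OF 3(2)])
    show ?thesis unfolding a b by (rule E_zero)
  qed
qed

lemma E_mshift: "E d (\<lambda>i. - shift_lazy d k i) \<theta> = cnj (av d (Zm d \<theta>) k)"
  using E_cnj[of d "shift_lazy d k" \<theta>] E_shift[of d k \<theta>] by simp

definition pw :: "nat \<Rightarrow> (nat \<Rightarrow> complex) \<Rightarrow> (nat \<Rightarrow> real) \<Rightarrow> nat \<Rightarrow> complex" where
  "pw d \<phi> \<theta> k = cinner_fin (2*d+1) \<phi> (wo d (Zm d \<theta>)) * wo d (Zm d \<theta>) k"
definition yf :: "nat \<Rightarrow> (nat \<Rightarrow> complex) \<Rightarrow> (nat \<Rightarrow> real) \<Rightarrow> nat \<Rightarrow> complex" where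
  "yf d \<phi> \<theta> k = \<phi> k - pw d \<phi> \<theta> k"
definition chi :: "nat \<Rightarrow> real \<Rightarrow> (nat \<Rightarrow> real) \<Rightarrow> complex" where
  "chi d \<delta> \<theta> = (if \<forall>j\<in>{1..d}. \<delta> \<le> cmod (1 + Zm d \<theta> j) then 1 else 0)"
definition rf :: "nat \<Rightarrow> (nat \<Rightarrow> complex) \<Rightarrow> real \<Rightarrow> (nat \<Rightarrow> real) \<Rightarrow> nat \<Rightarrow> complex" where
  "rf d \<phi> \<delta> \<theta> k = chi d \<delta> \<theta> * (- av d (Zm d \<theta>) k * yf d \<phi> \<theta> k / (1 + av d (Zm d \<theta>) k))"

lemma pw_meas[measurable]: "(\<lambda>\<theta>. pw d \<phi> \<theta> k) \<in> borel_measurable (Th d)"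
  unfolding pw_def cinner_fin_def by measurable
lemma yf_meas[measurable]: "(\<lambda>\<theta>. yf d \<phi> \<theta> k) \<in> borel_measurable (Th d)"
  unfolding yf_def by measurable
lemma chi_meas[measurable]: "chi d \<delta> \<in> borel_measurable (Th d)"
  unfolding chi_def by measurable
lemma rf_meas[measurable]: "(\<lambda>\<theta>. rf d \<phi> \<delta> \<theta> k) \<in> borel_measurable (Th d)"
  unfolding rf_def by measurable

lemma wo_out: "k \<notin> K d \<Longrightarrow> wo d z k = 0"
  by (cases "\<exists>j\<in>{1..d}. z j = -1") (simp_all add: wo_deg wo_vv vv_out)

lemma phi_bound:
  assumes "\<And>k. k \<notin> K d \<Longrightarrow> \<phi> k = 0"
  shows "cmod (\<phi> k) \<le> (\<Sum>l\<in>K d. cmod (\<phi> l))"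
proof (cases "k \<in> K d")
  case True then show ?thesis by (intro member_le_sum) (auto simp: K_def)
next
  case False then show ?thesis using assms by (simp add: sum_nonneg)
qed

lemma cinner_bound:
  assumes hz: "\<And>j. j \<in> {1..d} \<Longrightarrow> cmod (z j) = 1"
  shows "cmod (cinner_fin (2*d+1) \<phi> (wo d z)) \<le> (\<Sum>l\<in>K d. cmod (\<phi> l))"
proof -
  have "cmod (cinner_fin (2*d+1) \<phi> (wo d z)) \<le> (\<Sum>l\<in>K d. cmod (\<phi> l * cnj (wo d z l)))"
    unfolding cinner_fin_def K_def by (rule norm_sum)
  also have "\<dots> \<le> (\<Sum>l\<in>K d. cmod (\<phi> l))"
  proof (rule sum_mono)
    fix l
    have "cmod (\<phi> l) * cmod (wo d z l) \<le> cmod (\<phi> l) * 1"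
      by (intro mult_left_mono wo_le1 hz) auto
    then show "cmod (\<phi> l * cnj (wo d z l)) \<le> cmod (\<phi> l)" by (simp add: norm_mult)
  qed
  finally show ?thesis .
qed

lemma pw_bound: "cmod (pw d \<phi> \<theta> k) \<le> (\<Sum>l\<in>K d. cmod (\<phi> l))"
proof -
  have "cmod (pw d \<phi> \<theta> k) \<le> (\<Sum>l\<in>K d. cmod (\<phi> l)) * 1"
    unfolding pw_def norm_mult
    by (intro mult_mono cinner_bound wo_le1 Zm_norm sum_nonneg) auto
  then show ?thesis by simp
qed

lemma yf_bound:
  assumes "\<And>k. k \<notin> K d \<Longrightarrow> \<phi> k = 0"
  shows "cmod (yf d \<phi> \<theta> k) \<le> 2 * (\<Sum>l\<in>K d. cmod (\<phi> l))"
  unfolding yf_def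
  using norm_triangle_ineq4[of "\<phi> k" "pw d \<phi> \<theta> k"] phi_bound[where d=d and \<phi>=\<phi> and k=k, OF assms] pw_bound[of d \<phi> \<theta> k]
  by linarith

lemma yf_out:
  assumes "\<And>k. k \<notin> K d \<Longrightarrow> \<phi> k = 0"
  shows "k \<notin> K d \<Longrightarrow> yf d \<phi> \<theta> k = 0"
  unfolding yf_def pw_def using assms by (simp add: wo_out)

lemma good_pw: "good d (pw d \<phi>)"
  unfolding good_def
proof (intro conjI)
  show "\<forall>k. (\<lambda>\<theta>. pw d \<phi> \<theta> k) \<in> borel_measurable (Th d)" by simp
  show "\<exists>B. \<forall>\<theta> k. cmod (pw d \<phi> \<theta> k) \<le> B" using pw_bound by blast
  show "\<forall>\<theta> k. k \<notin> K d \<longrightarrow> pw d \<phi> \<theta> k = 0" by (simp add: pw_def wo_out)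
qed

lemma good_yf:
  assumes "\<And>k. k \<notin> K d \<Longrightarrow> \<phi> k = 0"
  shows "good d (yf d \<phi>)"
  unfolding good_def
proof (intro conjI)
  show "\<forall>k. (\<lambda>\<theta>. yf d \<phi> \<theta> k) \<in> borel_measurable (Th d)" by simp
  show "\<exists>B. \<forall>\<theta> k. cmod (yf d \<phi> \<theta> k) \<le> B" using yf_bound[where d=d and \<phi>=\<phi>, OF assms] by blast
  show "\<forall>\<theta> k. k \<notin> K d \<longrightarrow> yf d \<phi> \<theta> k = 0" using yf_out[where d=d and \<phi>=\<phi>, OF assms] by blast
qed

lemma good_const:
  assumes "\<And>k. k \<notin> K d \<Longrightarrow> \<phi> k = 0"
  shows "good d (\<lambda>\<theta> k. \<phi> k)"
  unfolding good_def
proof (intro conjI)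
  show "\<forall>k. (\<lambda>\<theta>. \<phi> k) \<in> borel_measurable (Th d)" by simp
  show "\<exists>B. \<forall>(\<theta>::nat\<Rightarrow>real) k. cmod (\<phi> k) \<le> B" using phi_bound[where d=d and \<phi>=\<phi>, OF assms] by blast
  show "\<forall>(\<theta>::nat\<Rightarrow>real) k. k \<notin> K d \<longrightarrow> \<phi> k = 0" using assms by blast
qed

lemma chi_nd:
  assumes "chi d \<delta> \<theta> \<noteq> 0" "\<delta> > 0"
  shows "\<And>j. j \<in> {1..d} \<Longrightarrow> Zm d \<theta> j \<noteq> -1"
proof
  fix j assume j: "j \<in> {1..d}" and e: "Zm d \<theta> j = -1"
  have "\<forall>j\<in>{1..d}. \<delta> \<le> cmod (1 + Zm d \<theta> j)" using assms(1) unfolding chi_def by (auto split: if_splits)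
  then have "\<delta> \<le> cmod (1 + Zm d \<theta> j)" using j by blast
  then show False using e assms(2) by simp
qed

lemma chi_av:
  assumes "chi d \<delta> \<theta> \<noteq> 0" "\<delta> \<le> 1" "k \<in> K d"
  shows "\<delta> \<le> cmod (1 + av d (Zm d \<theta>) k)"
proof -
  have h: "\<And>j. j \<in> {1..d} \<Longrightarrow> \<delta> \<le> cmod (1 + Zm d \<theta> j)"
    using assms(1) unfolding chi_def by (auto split: if_splits)
  show ?thesis using assms(3)
  proof (cases rule: K_cases)
    case A then show ?thesis using h by (simp add: av_simps)
  next
    case B then show ?thesis using assms(2) by (simp add: av_simps av_simps')
  next
    case (C j)
    have "cmod (1 + cnj (Zm d \<theta> j)) = cmod (1 + Zm d \<theta> j)"
      by (metis complex_cnj_add complex_cnj_one complex_mod_cnj)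
    then show ?thesis using h[OF C(1)] C by (simp add: av_simps av_simps')
  qed
qed

lemma chi_01: "chi d \<delta> \<theta> = 0 \<or> chi d \<delta> \<theta> = 1"
  unfolding chi_def by auto

lemma rf_bound:
  assumes "\<And>k. k \<notin> K d \<Longrightarrow> \<phi> k = 0" and d: "\<delta> > 0" "\<delta> \<le> 1"
  shows "cmod (rf d \<phi> \<delta> \<theta> k) \<le> 2 * (\<Sum>l\<in>K d. cmod (\<phi> l)) / \<delta>"
proof (cases "chi d \<delta> \<theta> = 0 \<or> k \<notin> K d")
  case True
  then have "rf d \<phi> \<delta> \<theta> k = 0" unfolding rf_def using yf_out[where d=d and \<phi>=\<phi>, OF assms(1)] by auto
  then show ?thesis using d by (simp add: sum_nonneg)
next
  case False
  then have c1: "chi d \<delta> \<theta> = 1" and k: "k \<in> K d" using chi_01 by auto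
  have a: "cmod (av d (Zm d \<theta>) k) = 1" by (rule av_norm) (rule Zm_norm)
  have b: "\<delta> \<le> cmod (1 + av d (Zm d \<theta>) k)" using c1 d k by (intro chi_av) auto
  have "cmod (rf d \<phi> \<delta> \<theta> k) = cmod (yf d \<phi> \<theta> k) / cmod (1 + av d (Zm d \<theta>) k)"
    unfolding rf_def c1 by (simp add: norm_mult norm_divide a)
  also have "\<dots> \<le> 2 * (\<Sum>l\<in>K d. cmod (\<phi> l)) / \<delta>"
    by (rule frac_le) (use yf_bound[where d=d and \<phi>=\<phi>, OF assms(1)] b d in \<open>auto simp: sum_nonneg\<close>)
  finally show ?thesis .
qed

lemma good_rf:
  assumes "\<And>k. k \<notin> K d \<Longrightarrow> \<phi> k = 0" and d: "\<delta> > 0" "\<delta> \<le> 1"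
  shows "good d (rf d \<phi> \<delta>)"
  unfolding good_def
proof (intro conjI)
  show "\<forall>k. (\<lambda>\<theta>. rf d \<phi> \<delta> \<theta> k) \<in> borel_measurable (Th d)" by simp
  show "\<exists>B. \<forall>\<theta> k. cmod (rf d \<phi> \<delta> \<theta> k) \<le> B" using rf_bound[where d=d and \<phi>=\<phi>, OF assms] by blast
  show "\<forall>\<theta> k. k \<notin> K d \<longrightarrow> rf d \<phi> \<delta> \<theta> k = 0"
    using yf_out[where d=d and \<phi>=\<phi>, OF assms(1)] by (simp add: rf_def)
qed

lemma Uh_pw: "Uh d (pw d \<phi>) = pw d \<phi>"
proof (intro ext)
  fix \<theta> k
  define c where "c = cinner_fin (2*d+1) \<phi> (wo d (Zm d \<theta>))"
  have w: "pw d \<phi> \<theta> = (\<lambda>k. c * wo d (Zm d \<theta>) k)" unfolding pw_def c_def by auto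
  have "Uh d (pw d \<phi>) \<theta> k = c * (av d (Zm d \<theta>) k * grover (2*d+1) (wo d (Zm d \<theta>)) k)"
    unfolding Uh_def w grover_cmult E_shift by (simp add: mult_ac)
  also have "\<dots> = c * wo d (Zm d \<theta>) k" by (subst eigen) (auto intro: Zm_norm)
  finally show "Uh d (pw d \<phi>) \<theta> k = pw d \<phi> \<theta> k" unfolding pw_def c_def .
qed

lemma Wh_rf:
  assumes "\<And>k. k \<notin> K d \<Longrightarrow> \<phi> k = 0" and d: "\<delta> > 0"
  shows "Wh d (rf d \<phi> \<delta>) \<theta> k - rf d \<phi> \<delta> \<theta> k = chi d \<delta> \<theta> * yf d \<phi> \<theta> k"
proof (cases "chi d \<delta> \<theta> = 0")
  case True
  then have "rf d \<phi> \<delta> \<theta> = (\<lambda>l. 0)" unfolding rf_def by auto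
  then show ?thesis using True by (simp add: Wh_def grover_zero)
next
  case False
  then have c1: "chi d \<delta> \<theta> = 1" using chi_01 by auto
  define z where "z = Zm d \<theta>"
  have hz: "\<And>j. j \<in> {1..d} \<Longrightarrow> cmod (z j) = 1" unfolding z_def by (rule Zm_norm)
  have nd: "\<And>j. j \<in> {1..d} \<Longrightarrow> z j \<noteq> -1" unfolding z_def using chi_nd[OF False d] .
  have u0: "\<And>k. k \<notin> K d \<Longrightarrow> yf d \<phi> \<theta> k = 0" by (rule yf_out[where d=d and \<phi>=\<phi>, OF assms(1)])
  have us: "(\<Sum>k\<in>K d. yf d \<phi> \<theta> k / (1 + av d z k)) = 0"
    unfolding yf_def pw_def z_def[symmetric] by (rule y_orth[where d=d and z=z, OF hz nd])
  have "Wh d (rf d \<phi> \<delta>) \<theta> k - rf d \<phi> \<delta> \<theta> k =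
        grover (2*d+1) (\<lambda>l. cnj (av d z l) * (- av d z l * yf d \<phi> \<theta> l / (1 + av d z l))) k
          - (- av d z k * yf d \<phi> \<theta> k / (1 + av d z k))"
    unfolding Wh_def rf_def c1 E_mshift z_def by simp
  also have "\<dots> = yf d \<phi> \<theta> k" by (rule Wr[where d=d and z=z, OF hz nd u0 us])
  finally show ?thesis using c1 by simp
qed

lemma cis_ne_m1:
  assumes "t \<in> {0..2*pi}" "t \<noteq> pi"
  shows "cis t \<noteq> -1"
proof
  assume "cis t = -1"
  then have "Re (cis t) = Re (-1)" by simp
  then have "cos t = -1" by simp
  then obtain n :: int where n: "t = (2*n+1) * pi" by (auto simp: cos_eq_minus1)
  have q: "real_of_int (2*n+1) = t / pi" using n by simp
  have "0 \<le> t / pi" using assms(1) by simp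
  moreover have "t / pi \<le> 2" using assms(1) by (simp add: divide_le_eq)
  ultimately have "0 \<le> real_of_int (2*n+1)" "real_of_int (2*n+1) \<le> 2" unfolding q by auto
  then have "n = 0" by linarith
  then show False using n assms(2) by simp
qed

lemma AE_UM_cis: "AE t in UM. cis t \<noteq> -1"
  unfolding UM_def
proof (rule AE_uniform_measureI)
  show "{0..2*pi} \<in> sets lborel" by simp
  show "AE x in lborel. x \<in> {0..2*pi} \<longrightarrow> cis x \<noteq> -1"
    using AE_lborel_singleton[of pi] by eventually_elim (metis cis_ne_m1)
qed

lemma AE_nd: "AE \<theta> in Th d. \<forall>j\<in>{1..d}. Zm d \<theta> j \<noteq> -1"
proof (rule eventually_ball_finite)
  show "finite {1..d}" by simp
  show "\<forall>j\<in>{1..d}. AE \<theta> in Th d. Zm d \<theta> j \<noteq> -1"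
  proof
    fix j assume j: "j \<in> {1..d}"
    have "AE \<theta> in Th d. cis (\<theta> j) \<noteq> -1"
      unfolding Th_def by (rule AE_PiM_component[OF prob_UM j AE_UM_cis])
    then show "AE \<theta> in Th d. Zm d \<theta> j \<noteq> -1"
      by eventually_elim (simp add: Zm_in[OF j])
  qed
qed

lemma dom_lim:
  assumes \<phi>0: "\<And>k. k \<notin> K d \<Longrightarrow> \<phi> k = 0"
  shows "(\<lambda>n. integral\<^sup>L (Th d) (\<lambda>\<theta>. \<Sum>k\<in>K d. (cmod ((1 - chi d (1 / (real n + 2)) \<theta>) * yf d \<phi> \<theta> k))^2))
          \<longlonglongrightarrow> 0"
proof -
  define B where "B = 2 * (\<Sum>l\<in>K d. cmod (\<phi> l))"
  have yb: "cmod (yf d \<phi> \<theta> k) \<le> B" for \<theta> k unfolding B_def by (rule yf_bound[where d=d and \<phi>=\<phi>, OF \<phi>0])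
  have B0: "0 \<le> B" using yb[of undefined 0] by (meson norm_ge_zero order_trans)
  define s where "s n \<theta> = (\<Sum>k\<in>K d. (cmod ((1 - chi d (1 / (real n + 2)) \<theta>) * yf d \<phi> \<theta> k))^2)" for n \<theta>
  have "(\<lambda>n. integral\<^sup>L (Th d) (s n)) \<longlonglongrightarrow> integral\<^sup>L (Th d) (\<lambda>\<theta>. 0::real)"
  proof (rule integral_dominated_convergence[where w="\<lambda>\<theta>. real (card (K d)) * B^2"])
    show "(\<lambda>\<theta>. 0::real) \<in> borel_measurable (Th d)" by simp
    show "s n \<in> borel_measurable (Th d)" for n unfolding s_def by measurable
    show "integrable (Th d) (\<lambda>\<theta>. real (card (K d)) * B^2)"
      by (rule bnd_int[where B="real (card (K d)) * B^2"]) auto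
    show "AE \<theta> in Th d. norm (s n \<theta>) \<le> real (card (K d)) * B^2" for n
    proof (intro AE_I2)
      fix \<theta>
      have c: "cmod (1 - chi d (1 / (real n + 2)) \<theta>) \<le> 1"
        using chi_01[of d "1 / (real n + 2)" \<theta>] by auto
      have "s n \<theta> \<le> (\<Sum>k\<in>K d. B^2)"
        unfolding s_def
      proof (rule sum_mono)
        fix k
        have "cmod ((1 - chi d (1 / (real n + 2)) \<theta>) * yf d \<phi> \<theta> k) \<le> 1 * B"
          unfolding norm_mult by (intro mult_mono c yb) auto
        then show "(cmod ((1 - chi d (1 / (real n + 2)) \<theta>) * yf d \<phi> \<theta> k))^2 \<le> B^2"
          by (intro power_mono) auto
      qed
      moreover have "0 \<le> s n \<theta>" unfolding s_def by (intro sum_nonneg) auto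
      ultimately show "norm (s n \<theta>) \<le> real (card (K d)) * B^2" by simp
    qed
    show "AE \<theta> in Th d. (\<lambda>n. s n \<theta>) \<longlonglongrightarrow> 0"
      using AE_nd
    proof eventually_elim
      fix \<theta> assume nd: "\<forall>j\<in>{1..d}. Zm d \<theta> j \<noteq> -1"
      have ev: "\<forall>j\<in>{1..d}. eventually (\<lambda>n. 1 / (real n + 2) \<le> cmod (1 + Zm d \<theta> j)) sequentially"
      proof
        fix j assume j: "j \<in> {1..d}"
        have pos: "0 < cmod (1 + Zm d \<theta> j)" using nd j one_plus_ne by auto
        have "(\<lambda>n. 1 / (real n + 2)) \<longlonglongrightarrow> 0"
        proof -
          have "(\<lambda>n. inverse (real (Suc (Suc n)))) \<longlonglongrightarrow> 0"
            using LIMSEQ_Suc[OF LIMSEQ_inverse_real_of_nat] .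
          moreover have "(\<lambda>n. 1 / (real n + 2)) = (\<lambda>n. inverse (real (Suc (Suc n))))"
            by (auto simp: fun_eq_iff divide_inverse algebra_simps)
          ultimately show ?thesis by simp
        qed
        from order_tendstoD(2)[OF this pos]
        show "eventually (\<lambda>n. 1 / (real n + 2) \<le> cmod (1 + Zm d \<theta> j)) sequentially"
          by eventually_elim simp
      qed
      have "eventually (\<lambda>n. \<forall>j\<in>{1..d}. 1 / (real n + 2) \<le> cmod (1 + Zm d \<theta> j)) sequentially"
        by (rule eventually_ball_finite[OF _ ev]) simp
      then have "eventually (\<lambda>n. s n \<theta> = 0) sequentially"
        by eventually_elim (simp add: s_def chi_def)
      then show "(\<lambda>n. s n \<theta>) \<longlonglongrightarrow> 0" by (rule tendsto_eventually)
    qed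
  qed
  then show ?thesis unfolding s_def by simp
qed

lemma comp_meas_P[measurable]: "(\<lambda>z::nat\<Rightarrow>complex. z j) \<in> borel_measurable (PiM {1..d} (\<lambda>_. borel))"
proof (cases "j \<in> {1..d}")
  case True
  then show ?thesis by (rule measurable_component_singleton)
next
  case False
  have "(\<lambda>z::nat\<Rightarrow>complex. z j) \<in> borel_measurable (PiM {1..d} (\<lambda>_. borel)) \<longleftrightarrow>
        (\<lambda>z::nat\<Rightarrow>complex. undefined :: complex) \<in> borel_measurable (PiM {1..d} (\<lambda>_. borel))"
    by (rule measurable_cong) (use False in \<open>auto simp: space_PiM PiE_def extensional_def\<close>)
  then show ?thesis by simp
qed

lemma integrand_meas:
  "(\<lambda>z. zpow d z (\<lambda>j. - x j) * cinner_fin (2*d+1) \<phi> (wo d z) * wo d z k)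
     \<in> borel_measurable (PiM {1..d} (\<lambda>_. borel))"
  unfolding zpow_def power_int_def cinner_fin_def wo_def Dz_def by measurable

lemma chi_bound: "cmod (chi d \<delta> \<theta>) \<le> 1"
  unfolding chi_def by auto

lemma good_chiy:
  assumes "\<And>k. k \<notin> K d \<Longrightarrow> \<phi> k = 0"
  shows "good d (\<lambda>\<theta> k. chi d \<delta> \<theta> * yf d \<phi> \<theta> k)"
  by (rule good_cmult[OF good_yf[where d=d and \<phi>=\<phi>, OF assms]]) (auto intro: chi_bound)

lemma main_orth:
  assumes \<phi>0: "\<And>k. k \<notin> K d \<Longrightarrow> \<phi> k = 0" and e: "e \<in> eigenspace1 d"
  shows "l2inner d (FT d (yf d \<phi>)) e = 0"
proof -
  have el: "e \<in> l2space d" and eU: "U_lazy d e = e" using e unfolding eigenspace1_def by auto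
  define L where "L = l2inner d (FT d (yf d \<phi>)) e"
  define g where "g n \<theta> k = (1 - chi d (1 / (real n + 2)) \<theta>) * yf d \<phi> \<theta> k" for n \<theta> k
  have gy: "good d (yf d \<phi>)" by (rule good_yf[where d=d and \<phi>=\<phi>, OF \<phi>0])
  have gg: "good d (g n)" for n
  proof -
    have "g n = (\<lambda>\<theta> k. yf d \<phi> \<theta> k - chi d (1 / (real n + 2)) \<theta> * yf d \<phi> \<theta> k)"
      unfolding g_def by (auto simp: fun_eq_iff algebra_simps)
    then show ?thesis using good_diff[OF gy good_chiy[where d=d and \<phi>=\<phi>, OF \<phi>0]] by simp
  qed
  have Lg: "L = l2inner d (FT d (g n)) e" for n
  proof -
    define \<delta> where "\<delta> = 1 / (real n + 2)"
    have d0: "\<delta> > 0" "\<delta> \<le> 1" unfolding \<delta>_def by (auto simp: field_simps)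
    have gr: "good d (rf d \<phi> \<delta>)" by (rule good_rf[where d=d and \<phi>=\<phi>, OF \<phi>0 d0])
    have gc: "good d (\<lambda>\<theta> k. chi d \<delta> \<theta> * yf d \<phi> \<theta> k)" by (rule good_chiy[where d=d and \<phi>=\<phi>, OF \<phi>0])
    have Wh_eq: "Wh d (rf d \<phi> \<delta>) = (\<lambda>\<theta> k. chi d \<delta> \<theta> * yf d \<phi> \<theta> k + rf d \<phi> \<delta> \<theta> k)"
    proof (intro ext)
      fix \<theta> k
      show "Wh d (rf d \<phi> \<delta>) \<theta> k = chi d \<delta> \<theta> * yf d \<phi> \<theta> k + rf d \<phi> \<delta> \<theta> k"
        using Wh_rf[where d=d and \<phi>=\<phi>, OF \<phi>0 d0(1), of \<theta> k] by (simp add: algebra_simps)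
    qed
    have gW: "good d (Wh d (rf d \<phi> \<delta>))" unfolding Wh_eq by (rule good_add[OF gc gr])
    define R where "R = FT d (rf d \<phi> \<delta>)"
    have Rl: "R \<in> l2space d" unfolding R_def by (rule FT_l2[OF gr])
    have WR: "Wop d R = FT d (Wh d (rf d \<phi> \<delta>))" unfolding R_def by (rule W_FT[OF gr])
    have WRl: "Wop d R \<in> l2space d" unfolding WR by (rule FT_l2[OF gW])
    have c_eq: "(\<lambda>\<theta> k. chi d \<delta> \<theta> * yf d \<phi> \<theta> k) = (\<lambda>\<theta> k. Wh d (rf d \<phi> \<delta>) \<theta> k - rf d \<phi> \<delta> \<theta> k)"
      unfolding Wh_eq by simp
    have FTc: "FT d (\<lambda>\<theta> k. chi d \<delta> \<theta> * yf d \<phi> \<theta> k) = (\<lambda>x k. Wop d R x k - R x k)"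
    proof -
      have "FT d (\<lambda>\<theta> k. chi d \<delta> \<theta> * yf d \<phi> \<theta> k) = (\<lambda>x k. FT d (Wh d (rf d \<phi> \<delta>)) x k - FT d (rf d \<phi> \<delta>) x k)"
        unfolding c_eq by (rule FT_diff[OF gW gr])
      then show ?thesis using WR unfolding R_def by simp
    qed
    have i1: "l2inner d (FT d (\<lambda>\<theta> k. chi d \<delta> \<theta> * yf d \<phi> \<theta> k)) e = 0"
    proof -
      have "l2inner d (FT d (\<lambda>\<theta> k. chi d \<delta> \<theta> * yf d \<phi> \<theta> k)) e = l2inner d (Wop d R) e - l2inner d R e"
        unfolding FTc by (rule ip_diff_left[OF WRl Rl el])
      also have "\<dots> = l2inner d R (U_lazy d e) - l2inner d R e" by (simp add: adjoint[OF Rl el])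
      also have "\<dots> = 0" by (simp add: eU)
      finally show ?thesis .
    qed
    have g_eq: "g n = (\<lambda>\<theta> k. yf d \<phi> \<theta> k - chi d \<delta> \<theta> * yf d \<phi> \<theta> k)"
      unfolding g_def \<delta>_def by (auto simp: fun_eq_iff algebra_simps)
    have "l2inner d (FT d (g n)) e = l2inner d (FT d (yf d \<phi>)) e - l2inner d (FT d (\<lambda>\<theta> k. chi d \<delta> \<theta> * yf d \<phi> \<theta> k)) e"
      unfolding g_eq FT_diff[OF gy gc] by (rule ip_diff_left[OF FT_l2[OF gy] FT_l2[OF gc] el])
    then show ?thesis unfolding L_def i1 by simp
  qed
  define I where "I n = integral\<^sup>L (Th d) (\<lambda>\<theta>. \<Sum>k\<in>K d. (cmod (g n \<theta> k))^2)" for n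
  have I0: "I \<longlonglongrightarrow> 0" unfolding I_def g_def by (rule dom_lim[where d=d and \<phi>=\<phi>, OF \<phi>0])
  have bnd: "cmod L \<le> (t * I n + nrm d e / t) / 2" if t: "t > 0" for t n
  proof -
    have "cmod L \<le> (t * nrm d (FT d (g n)) + nrm d e / t) / 2"
      unfolding Lg[of n] by (rule ip_bound[OF FT_l2[OF gg] el t])
    also have "\<dots> \<le> (t * I n + nrm d e / t) / 2"
      unfolding I_def using FT_nrm[OF gg[of n]] t by (intro divide_right_mono add_right_mono mult_left_mono) auto
    finally show ?thesis .
  qed
  have "cmod L \<le> 0"
  proof (rule field_le_epsilon)
    fix \<epsilon> :: real assume \<epsilon>: "0 < \<epsilon>"
    define t where "t = (nrm d e + 1) / \<epsilon>"
    have ne: "0 \<le> nrm d e" by (rule nrm_nonneg)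
    have t0: "t > 0" unfolding t_def using \<epsilon> ne by simp
    have "eventually (\<lambda>n. I n < \<epsilon> / t) sequentially"
      using order_tendstoD(2)[OF I0] t0 \<epsilon> by simp
    then obtain n where n: "I n < \<epsilon> / t" by (metis eventually_sequentially order_refl)
    have "t * I n \<le> \<epsilon>" using n t0 by (simp add: field_simps)
    moreover have "nrm d e / t \<le> \<epsilon>"
      unfolding t_def using \<epsilon> ne by (simp add: field_simps)
    ultimately have "(t * I n + nrm d e / t) / 2 \<le> \<epsilon>" by simp
    then show "cmod L \<le> 0 + \<epsilon>" using bnd[OF t0, of n] by simp
  qed
  then show ?thesis unfolding L_def by simp
qed

theorem mainTheorem4:
  fixes d :: nat and \<phi> :: "nat \<Rightarrow> complex" and x :: "nat \<Rightarrow> int"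
  assumes "d \<ge> 1"
    and "\<forall>k. k \<notin> {1..2*d+1} \<longrightarrow> \<phi> k = 0"
    and "x \<in> Zd d"
  shows "proj_plus d (delta0 \<phi>) x =
    (\<lambda>k. LINT z|haar d. zpow d z (\<lambda>j. - x j) * cinner_fin (2*d+1) \<phi> (wo d z) * wo d z k)"
proof -
  have \<phi>0: "\<And>k. k \<notin> K d \<Longrightarrow> \<phi> k = 0" using assms(2) unfolding K_def by blast
  define p where "p = FT d (pw d \<phi>)"
  have gp: "good d (pw d \<phi>)" by (rule good_pw)
  have gc: "good d (\<lambda>\<theta> k. \<phi> k)" by (rule good_const[where d=d and \<phi>=\<phi>, OF \<phi>0])
  have pl: "p \<in> l2space d" unfolding p_def by (rule FT_l2[OF gp])
  have pU: "U_lazy d p = p" unfolding p_def U_FT[OF gp] Uh_pw ..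
  have pe: "p \<in> eigenspace1 d" unfolding eigenspace1_def using pl pU by simp
  have dl: "delta0 \<phi> = FT d (\<lambda>\<theta> k. \<phi> k)" by (rule FT_delta[where d=d and \<phi>=\<phi>, OF \<phi>0, symmetric])
  have dll: "delta0 \<phi> \<in> l2space d" unfolding dl by (rule FT_l2[OF gc])
  have diff: "(\<lambda>x k. delta0 \<phi> x k - p x k) = FT d (yf d \<phi>)"
  proof -
    have "FT d (yf d \<phi>) = FT d (\<lambda>\<theta> k. \<phi> k - pw d \<phi> \<theta> k)" unfolding yf_def ..
    also have "\<dots> = (\<lambda>x k. FT d (\<lambda>\<theta> k. \<phi> k) x k - FT d (pw d \<phi>) x k)" by (rule FT_diff[OF gc gp])
    finally show ?thesis unfolding dl p_def by simp
  qed
  have proj: "proj_plus d (delta0 \<phi>) = p"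
  proof (rule proj_eq[OF dll pe])
    fix e assume e: "e \<in> eigenspace1 d"
    have "l2inner d (FT d (yf d \<phi>)) e = 0" by (rule main_orth[OF \<phi>0 e])
    then show "l2inner d (\<lambda>x k. delta0 \<phi> x k - p x k) e = 0" unfolding diff .
  qed
  show ?thesis
  proof (intro ext)
    fix k
    have "proj_plus d (delta0 \<phi>) x k = integral\<^sup>L (Th d) (\<lambda>\<theta>. E d (\<lambda>j. - x j) \<theta> * pw d \<phi> \<theta> k)"
      unfolding proj p_def FT_def using assms(3) by simp
    also have "\<dots> = integral\<^sup>L (Th d) (\<lambda>\<theta>. (\<lambda>z. zpow d z (\<lambda>j. - x j) * cinner_fin (2*d+1) \<phi> (wo d z) * wo d z k) (Zm d \<theta>))"
      by (simp add: zpow_Zm pw_def mult.assoc)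
    also have "\<dots> = (LINT z|haar d. zpow d z (\<lambda>j. - x j) * cinner_fin (2*d+1) \<phi> (wo d z) * wo d z k)"
      by (rule int_haar[symmetric]) (rule integrand_meas)
    finally show "proj_plus d (delta0 \<phi>) x k =
       (LINT z|haar d. zpow d z (\<lambda>j. - x j) * cinner_fin (2*d+1) \<phi> (wo d z) * wo d z k)" .
  qed
qed

end
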